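(* Let $m\ge n$, $1\le r\le n$, $\delta=r/n$, $\mu\in[0,1)$, $\tau\in\mathbb{Z}_{\ge1}$, $\eta>0$, and suppose Assumption (A3) holds. Then the momentum iterates $\bm m_t$ of PowerSGD+ with MSGD satisfy, for every $t\ge0$, $$\mathbb{E}\|\bm m_t\|_F^2\le\frac{92\tau^2G^2}{(1-\mu)^2\delta^2}.$$
   Context: Setting: $N$ nodes jointly minimize $f(\bm{X})=\frac1N\sum_{i=1}^N f_i(\bm{X})$ over $\bm{X}\in\mathbb{R}^{m\times n}$, where $f_i(\bm{X})=\mathbb{E}_{\xi^{(i)}\sim\mathcal{D}_i}[F(\bm{X};\xi^{(i)})]$; node $i$ queries stochastic gradients $\nabla F(\bm{X};\xi^{(i)})$, sampled independently across nodes and iterations. Assumption (A3): $\|\nabla f(\bm{X})\|_F^2\le\omega^2$ for all $\bm X$, and $\mathbb{E}\|\frac1N\sum_{i=1}^N\nabla F(\bm{X};\xi^{(i)})\|_F^2\le G^2:=\sigma^2+\omega^2$ for all $\bm X$, where $\sigma^2$ bounds the variance $\mathbb{E}\|\nabla F(\bm{X};\xi^{(i)})-\nabla f_i(\bm{X})\|_F^2$ for all $i$ and $\bm X$. $\mathrm{QR}(\bm A)$, for $\bm A\in\mathbb{R}^{m\times r}$, denotes the factor $\bm Q\in\mathbb{R}^{m\times r}$ with $\bm Q^\top\bm Q=I_r$ of an economic QR decomposition $\bm A=\bm Q\bm R$. PowerSGD+ with MSGD (step size $\eta$, momentum $\mu$, restart period $\tau$, rank $r$): initialize $\bm X_0$,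 $\bm Q_{-1}\in\mathbb{R}^{n\times r}$, $\bm m_{-1}=0$, $\bm e_0^{(i)}=0$. For $t=0,1,\dots$: each node computes $\bm g_t^{(i)}=\nabla F(\bm X_t;\xi_t^{(i)})$ and $\bm\Delta_t^{(i)}=\bm g_t^{(i)}+\bm e_t^{(i)}$; let $\bm\Delta_t=\frac1N\sum_i\bm\Delta_t^{(i)}$. If $t\not\equiv0\pmod\tau$: $\tilde{\bm P}_t=\mathrm{QR}\big(\frac1N\sum_i\bm\Delta_t^{(i)}\bm Q_{t-1}\big)$; if $t\equiv0\pmod\tau$: $\tilde{\bm P}_t$ is the matrix of the top-$r$ left singular vectors of $\bm\Delta_t$. In both cases $\bm Q_t=\frac1N\sum_i(\bm\Delta_t^{(i)})^\top\tilde{\bm P}_t$, $\widehat{\bm\Delta}_t^{(i)}=\tilde{\bm P}_t\tilde{\bm P}_t^\top\bm\Delta_t^{(i)}$, $\widehat{\bm\Delta}_t=\tilde{\bm P}_t\bm Q_t^\top$, $\bm e_{t+1}^{(i)}=\bm\Delta_t^{(i)}-\widehat{\bm\Delta}_t^{(i)}$, $\bm m_t=\mu\bm m_{t-1}+\widehat{\bm\Delta}_t$, $\bm X_{t+1}=\bm X_t-\eta\bm m_t$. *)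

theory Defs
  imports "HOL-Analysis.Analysis" "HOL-Probability.Probability"
begin

text \<open>Matrices in R^{a x b} are represented as real^'b^'a (rows indexed by 'a).
  The library norm on this type is the Frobenius norm and the inner product is the
  Frobenius inner product.\<close>

definition is_QR_factor :: "real^('r::{finite,linorder})^'m \<Rightarrow> real^('r::{finite,linorder})^'m \<Rightarrow> bool" where
  "is_QR_factor A Q \<longleftrightarrow> transpose Q ** Q = mat 1 \<and>
     (\<exists>R :: real^('r::{finite,linorder})^('r::{finite,linorder}). (\<forall>i j. j < i \<longrightarrow> R $ i $ j = 0) \<and> A = Q ** R)"

definition is_top_left_sv :: "real^'n^'m \<Rightarrow> real^'r^'m \<Rightarrow> bool" where
  "is_top_left_sv D P \<longleftrightarrow>
     (\<exists>(U :: real^'n^'m) (V :: real^'n^'n) (s :: 'n \<Rightarrow> real) (emb :: 'r \<Rightarrow> 'n).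
        transpose U ** U = mat 1 \<and> transpose V ** V = mat 1 \<and> V ** transpose V = mat 1 \<and>
        (\<forall>k. 0 \<le> s k) \<and>
        D = U ** (\<chi> i j. if i = j then s i else 0) ** transpose V \<and>
        inj emb \<and> (\<forall>a j. P $ a $ j = U $ a $ emb j) \<and>
        (\<forall>j k. k \<notin> range emb \<longrightarrow> s k \<le> s (emb j)))"

text \<open>One iteration of PowerSGD+ with MSGD.  State before iteration t:
  (X_t, Q_{t-1}, m_{t-1}, e_t^{(.)}).  z i is the sample xi_t^{(i)} of node i.\<close>
definition psgd_step ::
  "(real^'r^'m \<Rightarrow> real^'r^'m) \<Rightarrow> (real^'n^'m \<Rightarrow> real^'r^'m) \<Rightarrow>
   (real^'n^'m \<Rightarrow> 'xi \<Rightarrow> real^'n^'m) \<Rightarrow> nat \<Rightarrow> real \<Rightarrow> real \<Rightarrow> nat \<Rightarrow>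
   nat \<Rightarrow> (nat \<Rightarrow> 'xi) \<Rightarrow>
   (real^'n^'m) \<times> (real^'r^'n) \<times> (real^'n^'m) \<times> (nat \<Rightarrow> real^'n^'m) \<Rightarrow>
   (real^'n^'m) \<times> (real^'r^'n) \<times> (real^'n^'m) \<times> (nat \<Rightarrow> real^'n^'m)" where
  "psgd_step qrsel svsel gradF N \<eta> \<mu> \<tau> t z st =
     (case st of (X, Qp, mp, e) \<Rightarrow>
       let g = (\<lambda>i. gradF X (z i));
           Di = (\<lambda>i. g i + e i);
           Dlt = (1 / real N) *\<^sub>R (\<Sum>i<N. Di i);
           P = (if t mod \<tau> \<noteq> 0 then qrsel ((1 / real N) *\<^sub>R (\<Sum>i<N. Di i ** Qp))
                else svsel Dlt);
           Q = (1 / real N) *\<^sub>R (\<Sum>i<N. transpose (Di i) ** P);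
           Dhi = (\<lambda>i. P ** transpose P ** Di i);
           Dh = P ** transpose Q;
           e' = (\<lambda>i. Di i - Dhi i);
           m = \<mu> *\<^sub>R mp + Dh;
           X' = X - \<eta> *\<^sub>R m
       in (X', Q, m, e'))"

text \<open>State before iteration t along a sample path xi (xi t i = xi_t^{(i)}).\<close>
fun psgd_state ::
  "(real^'r^'m \<Rightarrow> real^'r^'m) \<Rightarrow> (real^'n^'m \<Rightarrow> real^'r^'m) \<Rightarrow>
   (real^'n^'m \<Rightarrow> 'xi \<Rightarrow> real^'n^'m) \<Rightarrow> nat \<Rightarrow> real \<Rightarrow> real \<Rightarrow> nat \<Rightarrow>
   real^'n^'m \<Rightarrow> real^'r^'n \<Rightarrow> (nat \<Rightarrow> nat \<Rightarrow> 'xi) \<Rightarrow> nat \<Rightarrow>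
   (real^'n^'m) \<times> (real^'r^'n) \<times> (real^'n^'m) \<times> (nat \<Rightarrow> real^'n^'m)" where
  "psgd_state qrsel svsel gradF N \<eta> \<mu> \<tau> X0 Q0 xi 0 = (X0, Q0, 0, (\<lambda>_. 0))"
| "psgd_state qrsel svsel gradF N \<eta> \<mu> \<tau> X0 Q0 xi (Suc t) =
     psgd_step qrsel svsel gradF N \<eta> \<mu> \<tau> t (xi t)
       (psgd_state qrsel svsel gradF N \<eta> \<mu> \<tau> X0 Q0 xi t)"

definition psgd_mom where
  "psgd_mom qrsel svsel gradF N \<eta> \<mu> \<tau> X0 Q0 xi t =
     fst (snd (snd (psgd_state qrsel svsel gradF N \<eta> \<mu> \<tau> X0 Q0 xi (Suc t))))"

end

theory Submission
  imports Defs "HOL-Analysis.Analysis"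
begin
lemma inner_mat: "(A::real^'n^'m) \<bullet> B = (\<Sum>i\<in>UNIV. \<Sum>j\<in>UNIV. A$i$j * B$i$j)"
  by (simp add: inner_vec_def)

lemma inner_mult_left: "((A::real^'k^'m) ** B) \<bullet> (C::real^'n^'m) = B \<bullet> (transpose A ** C)"
proof -
  have "((A::real^'k^'m) ** B) \<bullet> (C::real^'n^'m) = (\<Sum>i\<in>UNIV. \<Sum>j\<in>UNIV. \<Sum>k\<in>UNIV. A$i$k * B$k$j * C$i$j)"
    by (simp add: inner_mat matrix_matrix_mult_def sum_distrib_right)
  also have "\<dots> = (\<Sum>i\<in>UNIV. \<Sum>k\<in>UNIV. \<Sum>j\<in>UNIV. A$i$k * B$k$j * C$i$j)"
    by (rule sum.cong[OF refl], rule sum.swap)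
  also have "\<dots> = (\<Sum>k\<in>UNIV. \<Sum>i\<in>UNIV. \<Sum>j\<in>UNIV. A$i$k * B$k$j * C$i$j)"
    by (rule sum.swap)
  also have "\<dots> = (\<Sum>k\<in>UNIV. \<Sum>j\<in>UNIV. \<Sum>i\<in>UNIV. A$i$k * B$k$j * C$i$j)"
    by (rule sum.cong[OF refl], rule sum.swap)
  also have "\<dots> = B \<bullet> (transpose A ** C)"
    by (simp add: inner_mat matrix_matrix_mult_def sum_distrib_left transpose_def mult_ac)
  finally show ?thesis .
qed

lemma inner_mult_right: "((A::real^'k^'m) ** B) \<bullet> (C::real^'n^'m) = A \<bullet> (C ** transpose B)"
proof -
  have "((A::real^'k^'m) ** B) \<bullet> (C::real^'n^'m) = (\<Sum>i\<in>UNIV. \<Sum>j\<in>UNIV. \<Sum>k\<in>UNIV. A$i$k * B$k$j * C$i$j)"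
    by (simp add: inner_mat matrix_matrix_mult_def sum_distrib_right)
  also have "\<dots> = (\<Sum>i\<in>UNIV. \<Sum>k\<in>UNIV. \<Sum>j\<in>UNIV. A$i$k * B$k$j * C$i$j)"
    by (rule sum.cong[OF refl], rule sum.swap)
  also have "\<dots> = A \<bullet> (C ** transpose B)"
    by (simp add: inner_mat matrix_matrix_mult_def sum_distrib_left transpose_def mult_ac)
  finally show ?thesis .
qed

lemma matrix_add_rdistrib': "((B + C) ** (A::real^'k^'n)) = (B ** A) + (C ** A)"
  by (simp add: matrix_matrix_mult_def vec_eq_iff sum.distrib distrib_right)
lemma transpose_add': "transpose (A + B) = transpose A + (transpose B::real^'n^'m)"
  by (simp add: transpose_def vec_eq_iff)
lemma transpose_zero': "transpose 0 = (0::real^'n^'m)"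
  by (simp add: transpose_def vec_eq_iff)
lemma mat_mult_sum_left: "(P::real^'k^'m) ** (\<Sum>i\<in>I. A i) = (\<Sum>i\<in>I. P ** A i)"
  by (induction I rule: infinite_finite_induct) (auto simp: matrix_add_ldistrib)
lemma mat_mult_sum_right: "(\<Sum>i\<in>I. A i) ** (P::real^'k^'m) = (\<Sum>i\<in>I. A i ** P)"
proof (induction I rule: infinite_finite_induct)
  case (insert x F)
  then show ?case by (simp add: matrix_add_rdistrib')
qed auto
lemma transpose_sum: "transpose (\<Sum>i\<in>I. A i) = (\<Sum>i\<in>I. transpose (A i :: real^'n^'m))"
proof (induction I rule: infinite_finite_induct)
  case (insert x F)
  then show ?case by (simp add: transpose_add')
qed (auto simp: transpose_zero')

lemma proj_norms:
  fixes P :: "real^'r^'m" and D :: "real^'n^'m"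
  assumes P: "transpose P ** P = mat 1"
  shows "(norm (P ** transpose P ** D))\<^sup>2 = (norm (transpose P ** D))\<^sup>2"
    and "(norm (D - P ** transpose P ** D))\<^sup>2 = (norm D)\<^sup>2 - (norm (transpose P ** D))\<^sup>2"
proof -
  define y where "y = transpose P ** D"
  have e: "P ** transpose P ** D = P ** y" unfolding y_def by (rule matrix_mul_assoc[symmetric])
  have "(P ** y) \<bullet> (P ** y) = y \<bullet> (transpose P ** (P ** y))" by (rule inner_mult_left)
  also have "transpose P ** (P ** y) = y" unfolding matrix_mul_assoc P by simp
  finally have 1: "(P ** y) \<bullet> (P ** y) = y \<bullet> y" .
  have 2: "(P ** y) \<bullet> D = y \<bullet> y" unfolding inner_mult_left y_def ..
  have n1: "(norm (P ** y))\<^sup>2 = (norm y)\<^sup>2" unfolding power2_norm_eq_inner 1 ..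
  then show "(norm (P ** transpose P ** D))\<^sup>2 = (norm (transpose P ** D))\<^sup>2"
    unfolding e y_def .
  have c: "D \<bullet> (P ** y) = (P ** y) \<bullet> D" by (rule inner_commute)
  have "(norm (D - P ** y))\<^sup>2 = D \<bullet> D - 2 * ((P ** y) \<bullet> D) + (P ** y) \<bullet> (P ** y)"
    unfolding power2_norm_eq_inner inner_diff_left inner_diff_right c by simp
  also have "\<dots> = (norm D)\<^sup>2 - (norm y)\<^sup>2" unfolding 1 2 power2_norm_eq_inner by simp
  finally show "(norm (D - P ** transpose P ** D))\<^sup>2 = (norm D)\<^sup>2 - (norm (transpose P ** D))\<^sup>2"
    unfolding e y_def .
qed

lemma proj_le:
  fixes P :: "real^'r^'m" and D :: "real^'n^'m"
  assumes P: "transpose P ** P = mat 1"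
  shows "norm (P ** transpose P ** D) \<le> norm D" "norm (D - P ** transpose P ** D) \<le> norm D"
proof -
  have a: "(norm (transpose P ** D))\<^sup>2 \<le> (norm D)\<^sup>2"
    using proj_norms(2)[OF P, of D] by (metis diff_ge_0_iff_ge zero_le_power2)
  have b: "(norm (P ** transpose P ** D))\<^sup>2 \<le> (norm D)\<^sup>2"
    using proj_norms(1)[OF P, of D] a by linarith
  show "norm (P ** transpose P ** D) \<le> norm D"
    by (rule power2_le_imp_le[OF b norm_ge_zero])
  have c: "(norm (D - P ** transpose P ** D))\<^sup>2 \<le> (norm D)\<^sup>2"
    using proj_norms(2)[OF P, of D] by simp
  show "norm (D - P ** transpose P ** D) \<le> norm D"
    by (rule power2_le_imp_le[OF c norm_ge_zero])
qed

lemma norm2_mat: "(norm (A::real^'n^'m))\<^sup>2 = (\<Sum>i\<in>UNIV. \<Sum>j\<in>UNIV. (A$i$j)\<^sup>2)"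
  unfolding power2_norm_eq_inner inner_mat by (simp add: power2_eq_square)

lemma topr_ineq:
  fixes s :: "'n::finite \<Rightarrow> real" and emb :: "'r::finite \<Rightarrow> 'n"
  assumes inj: "inj emb" and nn: "\<And>k. 0 \<le> s k"
    and top: "\<And>j k. k \<notin> range emb \<Longrightarrow> s k \<le> s (emb j)"
  shows "real CARD('r) * (\<Sum>k\<in>UNIV. (s k)\<^sup>2) \<le> real CARD('n) * (\<Sum>j\<in>UNIV. (s (emb j))\<^sup>2)"
proof -
  define T where "T = range emb"
  define A where "A = (\<Sum>j\<in>UNIV. (s (emb j))\<^sup>2)"
  define B where "B = (\<Sum>k\<in>UNIV - T. (s k)\<^sup>2)"
  have cardT: "card T = CARD('r)" unfolding T_def using inj by (simp add: card_image)
  have cardC: "card (UNIV - T) = CARD('n) - CARD('r)"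
    using cardT by (simp add: card_Diff_subset)
  have rle: "CARD('r) \<le> CARD('n)" using cardT card_mono[of UNIV T] by auto
  have sumT: "(\<Sum>k\<in>T. (s k)\<^sup>2) = A"
    unfolding T_def A_def using inj by (simp add: sum.reindex)
  have split: "(\<Sum>k\<in>UNIV. (s k)\<^sup>2) = A + B"
    unfolding B_def sumT[symmetric] by (metis add.commute sum.subset_diff finite top_greatest)
  define c where "c = Min (range (\<lambda>j. s (emb j)))"
  have cle: "c \<le> s (emb j)" for j unfolding c_def by (rule Min_le) auto
  have cin: "c \<in> range (\<lambda>j. s (emb j))" unfolding c_def by (rule Min_in) auto
  then have c0: "0 \<le> c" using nn by auto
  have A_ge: "real CARD('r) * c\<^sup>2 \<le> A"
  proof -
    have "(\<Sum>j\<in>(UNIV::'r set). c\<^sup>2) \<le> A" unfolding A_def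
      by (rule sum_mono) (use c0 cle in \<open>auto intro: power_mono\<close>)
    then show ?thesis by simp
  qed
  have B_le: "B \<le> real (CARD('n) - CARD('r)) * c\<^sup>2"
  proof -
    have "B \<le> (\<Sum>k\<in>UNIV - T. c\<^sup>2)" unfolding B_def
    proof (rule sum_mono)
      fix k assume "k \<in> UNIV - T"
      then have "s k \<le> c" using top cin unfolding T_def by auto
      then show "(s k)\<^sup>2 \<le> c\<^sup>2" using nn by (intro power_mono) auto
    qed
    then show ?thesis using cardC by simp
  qed
  have "real CARD('r) * B \<le> real CARD('r) * (real (CARD('n) - CARD('r)) * c\<^sup>2)"
    by (rule mult_left_mono[OF B_le]) simp
  also have "\<dots> = real (CARD('n) - CARD('r)) * (real CARD('r) * c\<^sup>2)" by simp
  also have "\<dots> \<le> real (CARD('n) - CARD('r)) * A"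
    by (rule mult_left_mono[OF A_ge]) simp
  finally have "real CARD('r) * B \<le> real (CARD('n) - CARD('r)) * A" .
  then have "real CARD('r) * B \<le> (real CARD('n) - real CARD('r)) * A"
    using rle by (simp add: of_nat_diff)
  then show ?thesis unfolding split A_def[symmetric] by (simp add: algebra_simps)
qed

lemma orth_left_norm:
  fixes U :: "real^'n^'m" and X :: "real^'k^'n"
  assumes "transpose U ** U = mat 1"
  shows "(norm (U ** X))\<^sup>2 = (norm X)\<^sup>2"
proof -
  have "(U ** X) \<bullet> (U ** X) = X \<bullet> (transpose U ** (U ** X))" by (rule inner_mult_left)
  also have "transpose U ** (U ** X) = X" unfolding matrix_mul_assoc assms by simp
  finally show ?thesis unfolding power2_norm_eq_inner .
qed

lemma orth_right_norm:
  fixes V :: "real^'n^'n" and X :: "real^'n^'k"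
  assumes "transpose V ** V = mat 1"
  shows "(norm (X ** transpose V))\<^sup>2 = (norm X)\<^sup>2"
proof -
  have "(X ** transpose V) \<bullet> (X ** transpose V) = X \<bullet> ((X ** transpose V) ** transpose (transpose V))"
    by (rule inner_mult_right)
  also have "(X ** transpose V) ** transpose (transpose V) = X"
    unfolding transpose_transpose matrix_mul_assoc[symmetric] assms by simp
  finally show ?thesis unfolding power2_norm_eq_inner .
qed

lemma svd_facts:
  fixes D :: "real^'n^'m" and P :: "real^'r^'m"
  assumes sv: "is_top_left_sv D P"
  shows "transpose P ** P = mat 1"
    and "real CARD('r) * (norm D)\<^sup>2 \<le> real CARD('n) * (norm (transpose P ** D))\<^sup>2"
proof -
  from sv[unfolded is_top_left_sv_def] obtain U :: "real^'n^'m" and V :: "real^'n^'n" and s :: "'n \<Rightarrow> real" and emb :: "'r \<Rightarrow> 'n" where H: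
     "transpose U ** U = mat 1 \<and> transpose V ** V = mat 1 \<and> V ** transpose V = mat 1 \<and>
        (\<forall>k. 0 \<le> s k) \<and>
        D = U ** (\<chi> i j. if i = j then s i else 0) ** transpose V \<and>
        inj emb \<and> (\<forall>a j. P $ a $ j = U $ a $ emb j) \<and>
        (\<forall>j k. k \<notin> range emb \<longrightarrow> s k \<le> s (emb j))" by blast
  then have U: "transpose U ** U = mat 1" and V: "transpose V ** V = mat 1"
    and s0: "\<forall>k. 0 \<le> s k" and DU: "D = U ** (\<chi> i j. if i = j then s i else 0) ** transpose V"
    and inj: "inj emb" and Pe: "\<forall>a j. P $ a $ j = U $ a $ emb j"
    and top: "\<forall>j k. k \<notin> range emb \<longrightarrow> s k \<le> s (emb j)" by auto
  have Uent: "(\<Sum>a\<in>UNIV. U$a$k * U$a$l) = (if k = l then 1 else 0)" for k l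
  proof -
    have "(transpose U ** U)$k$l = (\<Sum>a\<in>UNIV. U$a$k * U$a$l)"
      by (simp add: matrix_matrix_mult_def transpose_def)
    then show ?thesis using U by (simp add: mat_def)
  qed
  show "transpose P ** P = mat 1"
  proof -
    have "(transpose P ** P)$j$j' = (mat 1 :: real^'r^'r)$j$j'" for j j'
    proof -
      have "(transpose P ** P)$j$j' = (\<Sum>a\<in>UNIV. U$a$(emb j) * U$a$(emb j'))"
        by (simp add: matrix_matrix_mult_def transpose_def Pe)
      also have "\<dots> = (if j = j' then 1 else 0)" using Uent inj by (simp add: inj_eq)
      finally show ?thesis by (simp add: mat_def)
    qed
    then show ?thesis by (simp add: vec_eq_iff)
  qed
  define S :: "real^'n^'n" where "S = (\<chi> i j. if i = j then s i else 0)"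
  define E where "E = transpose P ** U"
  have Eent: "E$j$k = (if emb j = k then 1 else 0)" for j k
  proof -
    have "E$j$k = (\<Sum>a\<in>UNIV. U$a$(emb j) * U$a$k)"
      by (simp add: E_def matrix_matrix_mult_def transpose_def Pe)
    then show ?thesis using Uent by simp
  qed
  have ESent: "(E ** S)$j$k = (if k = emb j then s k else 0)" for j k
  proof -
    have "(E ** S)$j$k = (\<Sum>l\<in>UNIV. (if emb j = l then 1 else 0) * (if l = k then s l else 0))"
      by (simp add: matrix_matrix_mult_def Eent S_def)
    also have "\<dots> = (\<Sum>l\<in>UNIV. if l = emb j then (if l = k then s l else 0) else 0)"
      by (rule sum.cong) auto
    also have "\<dots> = (if k = emb j then s k else 0)"
      by simp
    finally show ?thesis .
  qed
  have nD: "(norm D)\<^sup>2 = (\<Sum>k\<in>UNIV. (s k)\<^sup>2)"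
  proof -
    have "(norm D)\<^sup>2 = (norm (U ** S))\<^sup>2" unfolding DU S_def[symmetric] by (rule orth_right_norm[OF V])
    also have "\<dots> = (norm S)\<^sup>2" by (rule orth_left_norm[OF U])
    also have "\<dots> = (\<Sum>i\<in>UNIV. \<Sum>j\<in>UNIV. (if i = j then s i else 0)\<^sup>2)"
      unfolding norm2_mat S_def by simp
    also have "\<dots> = (\<Sum>i\<in>UNIV. \<Sum>j\<in>UNIV. if j = i then (s i)\<^sup>2 else 0)"
      by (intro sum.cong) auto
    also have "\<dots> = (\<Sum>k\<in>UNIV. (s k)\<^sup>2)"
      by simp
    finally show ?thesis .
  qed
  have nPD: "(norm (transpose P ** D))\<^sup>2 = (\<Sum>j\<in>UNIV. (s (emb j))\<^sup>2)"
  proof -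
    have "transpose P ** D = (E ** S) ** transpose V"
      unfolding DU S_def[symmetric] E_def by (simp add: matrix_mul_assoc)
    then have "(norm (transpose P ** D))\<^sup>2 = (norm (E ** S))\<^sup>2" using orth_right_norm[OF V] by simp
    also have "\<dots> = (\<Sum>j\<in>UNIV. \<Sum>k\<in>UNIV. (if k = emb j then s k else 0)\<^sup>2)"
      unfolding norm2_mat ESent ..
    also have "\<dots> = (\<Sum>j\<in>UNIV. \<Sum>k\<in>UNIV. if k = emb j then (s (emb j))\<^sup>2 else 0)"
      by (intro sum.cong) auto
    also have "\<dots> = (\<Sum>j\<in>UNIV. (s (emb j))\<^sup>2)"
      by simp
    finally show ?thesis .
  qed
  show "real CARD('r) * (norm D)\<^sup>2 \<le> real CARD('n) * (norm (transpose P ** D))\<^sup>2"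
    unfolding nD nPD using topr_ineq[OF inj] s0 top by blast
qed

lemma svd_contract:
  fixes D :: "real^'n^'m" and P :: "real^'r^'m"
  assumes sv: "is_top_left_sv D P" and rn: "CARD('r) \<le> CARD('n)"
  shows "norm (D - P ** transpose P ** D) \<le> (1 - real CARD('r) / real CARD('n) / 2) * norm D"
proof -
  define d where "d = real CARD('r) / real CARD('n)"
  have P: "transpose P ** P = mat 1" by (rule svd_facts(1)[OF sv])
  have d0: "0 \<le> d" unfolding d_def by simp
  have key: "d * (norm D)\<^sup>2 \<le> (norm (transpose P ** D))\<^sup>2"
    using svd_facts(2)[OF sv] unfolding d_def by (simp add: field_simps)
  have "(norm (D - P ** transpose P ** D))\<^sup>2 \<le> (1 - d) * (norm D)\<^sup>2"
    using proj_norms(2)[OF P, of D] key by (simp add: algebra_simps)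
  also have "\<dots> \<le> ((1 - d / 2) * norm D)\<^sup>2"
  proof -
    have "((1 - d / 2) * norm D)\<^sup>2 = (1 - d) * (norm D)\<^sup>2 + (d * norm D)\<^sup>2 / 4"
      by (simp add: power2_eq_square algebra_simps)
    then show ?thesis by simp
  qed
  finally have h: "(norm (D - P ** transpose P ** D))\<^sup>2 \<le> ((1 - d / 2) * norm D)\<^sup>2" .
  have d1: "d \<le> 1"
    unfolding d_def using rn by simp
  show ?thesis unfolding d_def[symmetric]
    by (rule power2_le_imp_le[OF h]) (use d1 in simp)
qed

definition gbar :: "(real^'n^'m \<Rightarrow> 'xi \<Rightarrow> real^'n^'m) \<Rightarrow> nat \<Rightarrow> real^'n^'m \<Rightarrow> (nat \<Rightarrow> 'xi) \<Rightarrow> real^'n^'m" where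
  "gbar gradF N X z = (1 / real N) *\<^sub>R (\<Sum>i<N. gradF X (z i))"

definition ebar :: "nat \<Rightarrow> (nat \<Rightarrow> real^'n^'m) \<Rightarrow> real^'n^'m" where
  "ebar N e = (1 / real N) *\<^sub>R (\<Sum>i<N. e i)"

lemma step_eqs:
  fixes qrsel :: "real^('r::{finite,linorder})^'m \<Rightarrow> real^('r::{finite,linorder})^'m"
    and svsel :: "real^'n^'m \<Rightarrow> real^('r::{finite,linorder})^'m"
    and gradF :: "real^'n^'m \<Rightarrow> 'xi \<Rightarrow> real^'n^'m" and N :: nat and X :: "real^'n^'m"
    and z :: "nat \<Rightarrow> 'xi" and e :: "nat \<Rightarrow> real^'n^'m" and Qp :: "real^('r::{finite,linorder})^'n" and mp :: "real^'n^'m"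
    and t \<tau> :: nat and \<eta> \<mu> :: real
  defines "Dl \<equiv> gbar gradF N X z + ebar N e"
  defines "P \<equiv> (if t mod \<tau> \<noteq> 0 then qrsel ((1 / real N) *\<^sub>R (\<Sum>i<N. (gradF X (z i) + e i) ** Qp))
                else svsel Dl)"
  shows "ebar N (snd (snd (snd (psgd_step qrsel svsel gradF N \<eta> \<mu> \<tau> t z (X, Qp, mp, e)))))
           = Dl - P ** transpose P ** Dl"
    and "fst (snd (snd (psgd_step qrsel svsel gradF N \<eta> \<mu> \<tau> t z (X, Qp, mp, e))))
           = \<mu> *\<^sub>R mp + P ** transpose P ** Dl"
    and "fst (psgd_step qrsel svsel gradF N \<eta> \<mu> \<tau> t z (X, Qp, mp, e))
           = X - \<eta> *\<^sub>R (\<mu> *\<^sub>R mp + P ** transpose P ** Dl)"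
proof -
  have Dl': "(1 / real N) *\<^sub>R (\<Sum>i<N. gradF X (z i) + e i) = Dl"
    unfolding Dl_def gbar_def ebar_def by (simp add: sum.distrib scaleR_add_right)
  have Q: "(1 / real N) *\<^sub>R (\<Sum>i<N. transpose (gradF X (z i) + e i) ** P) = transpose Dl ** P"
    unfolding Dl'[symmetric] mat_mult_sum_right[symmetric] transpose_sum[symmetric]
    by (simp add: scalar_matrix_assoc transpose_scalar)
  have TQ: "transpose (transpose Dl ** P) = transpose P ** Dl"
    by (simp add: matrix_transpose_mul)
  have E: "(1 / real N) *\<^sub>R (\<Sum>i<N. (gradF X (z i) + e i) - P ** transpose P ** (gradF X (z i) + e i))
          = Dl - P ** transpose P ** Dl"
    unfolding Dl'[symmetric] sum_subtractf mat_mult_sum_left[symmetric]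
    by (simp add: matrix_scalar_ac scaleR_diff_right scalar_matrix_assoc)
  show "ebar N (snd (snd (snd (psgd_step qrsel svsel gradF N \<eta> \<mu> \<tau> t z (X, Qp, mp, e)))))
           = Dl - P ** transpose P ** Dl"
    unfolding psgd_step_def Let_def prod.case Dl' P_def[symmetric] ebar_def using E by simp
  show "fst (snd (snd (psgd_step qrsel svsel gradF N \<eta> \<mu> \<tau> t z (X, Qp, mp, e))))
           = \<mu> *\<^sub>R mp + P ** transpose P ** Dl"
    unfolding psgd_step_def Let_def prod.case Dl' P_def[symmetric] using Q TQ by (simp add: matrix_mul_assoc)
  show "fst (psgd_step qrsel svsel gradF N \<eta> \<mu> \<tau> t z (X, Qp, mp, e))
           = X - \<eta> *\<^sub>R (\<mu> *\<^sub>R mp + P ** transpose P ** Dl)"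
    unfolding psgd_step_def Let_def prod.case Dl' P_def[symmetric] using Q TQ by (simp add: matrix_mul_assoc)
qed

fun ce :: "(nat \<Rightarrow> real) \<Rightarrow> nat \<Rightarrow> nat \<Rightarrow> real" where
  "ce \<rho> 0 k = 0"
| "ce \<rho> (Suc t) k = \<rho> t * (ce \<rho> t k + (if k = t then 1 else 0))"

fun cm :: "(nat \<Rightarrow> real) \<Rightarrow> real \<Rightarrow> nat \<Rightarrow> nat \<Rightarrow> real" where
  "cm \<rho> \<mu> 0 k = 0"
| "cm \<rho> \<mu> (Suc t) k = \<mu> * cm \<rho> \<mu> t k + ce \<rho> t k + (if k = t then 1 else 0)"

lemma ce_zero: "t \<le> k \<Longrightarrow> ce \<rho> t k = 0"
  by (induction t) auto

lemma cm_zero: "t \<le> k \<Longrightarrow> cm \<rho> \<mu> t k = 0"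
  by (induction t) (auto simp: ce_zero)

lemma ce_nonneg: "(\<And>t. 0 \<le> \<rho> t) \<Longrightarrow> 0 \<le> ce \<rho> t k"
  by (induction t) auto

lemma cm_nonneg: "(\<And>t. 0 \<le> \<rho> t) \<Longrightarrow> 0 \<le> \<mu> \<Longrightarrow> 0 \<le> cm \<rho> \<mu> t k"
  by (induction t) (auto simp: ce_nonneg)

lemma sum_ce_Suc: "(\<Sum>k<Suc t. ce \<rho> (Suc t) k * a k) = \<rho> t * ((\<Sum>k<t. ce \<rho> t k * a k) + a t)"
proof -
  have "(\<Sum>k<Suc t. ce \<rho> (Suc t) k * a k) = (\<Sum>k<t. ce \<rho> (Suc t) k * a k) + ce \<rho> (Suc t) t * a t"
    by simp
  also have "(\<Sum>k<t. ce \<rho> (Suc t) k * a k) = \<rho> t * (\<Sum>k<t. ce \<rho> t k * a k)"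
    by (simp add: sum_distrib_left mult_ac)
  also have "ce \<rho> (Suc t) t = \<rho> t" by (simp add: ce_zero)
  finally show ?thesis by (simp add: algebra_simps)
qed

lemma sum_cm_Suc: "(\<Sum>k<Suc t. cm \<rho> \<mu> (Suc t) k * a k) = \<mu> * (\<Sum>k<t. cm \<rho> \<mu> t k * a k) + (\<Sum>k<t. ce \<rho> t k * a k) + a t"
proof -
  have "(\<Sum>k<Suc t. cm \<rho> \<mu> (Suc t) k * a k) = (\<Sum>k<t. cm \<rho> \<mu> (Suc t) k * a k) + cm \<rho> \<mu> (Suc t) t * a t"
    by simp
  also have "(\<Sum>k<t. cm \<rho> \<mu> (Suc t) k * a k) = \<mu> * (\<Sum>k<t. cm \<rho> \<mu> t k * a k) + (\<Sum>k<t. ce \<rho> t k * a k)"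
    by (simp add: sum_distrib_left sum.distrib algebra_simps)
  also have "cm \<rho> \<mu> (Suc t) t = 1" by (simp add: ce_zero cm_zero)
  finally show ?thesis by (simp add: algebra_simps)
qed

lemma path_bound:
  fixes E Mm a :: "nat \<Rightarrow> real"
  assumes rho: "\<And>t. 0 \<le> \<rho> t" and mu: "0 \<le> \<mu>"
    and E0: "E 0 = 0" and M0: "Mm 0 = 0"
    and Es: "\<And>t. E (Suc t) \<le> \<rho> t * (a t + E t)"
    and Ms: "\<And>t. Mm (Suc t) \<le> \<mu> * Mm t + a t + E t"
  shows "E t \<le> (\<Sum>k<t. ce \<rho> t k * a k)" "Mm t \<le> (\<Sum>k<t. cm \<rho> \<mu> t k * a k)"
proof -
  show Eb: "E t \<le> (\<Sum>k<t. ce \<rho> t k * a k)" for t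
  proof (induction t)
    case 0 then show ?case using E0 by simp
  next
    case (Suc t)
    have "E (Suc t) \<le> \<rho> t * (a t + E t)" by (rule Es)
    also have "\<dots> \<le> \<rho> t * (a t + (\<Sum>k<t. ce \<rho> t k * a k))"
      using Suc.IH rho by (intro mult_left_mono) auto
    finally show ?case unfolding sum_ce_Suc by (simp add: algebra_simps)
  qed
  show "Mm t \<le> (\<Sum>k<t. cm \<rho> \<mu> t k * a k)"
  proof (induction t)
    case 0 then show ?case using M0 by simp
  next
    case (Suc t)
    have "Mm (Suc t) \<le> \<mu> * Mm t + a t + E t" by (rule Ms)
    also have "\<dots> \<le> \<mu> * (\<Sum>k<t. cm \<rho> \<mu> t k * a k) + a t + (\<Sum>k<t. ce \<rho> t k * a k)"
      using Suc.IH Eb[of t] mu by (intro add_mono mult_left_mono) auto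
    finally show ?case unfolding sum_cm_Suc by (simp add: algebra_simps)
  qed
qed

lemma sum_ce_bound:
  fixes q :: real and \<tau> :: nat
  assumes q: "0 \<le> q" "q < 1" and tau: "\<tau> \<ge> 1"
  defines "\<rho> \<equiv> (\<lambda>t. if t mod \<tau> = 0 then q else 1)"
  shows "(\<Sum>k<t. ce \<rho> t k) + real ((\<tau> - t mod \<tau>) mod \<tau>) \<le> real \<tau> / (1 - q) - 1"
proof (induction t)
  case 0
  have "real \<tau> \<le> real \<tau> / (1 - q)" using q tau by (simp add: field_simps)
  then show ?case using tau by simp
next
  case (Suc t)
  have sS: "(\<Sum>k<Suc t. ce \<rho> (Suc t) k) = \<rho> t * ((\<Sum>k<t. ce \<rho> t k) + 1)"
    using sum_ce_Suc[of \<rho> t "\<lambda>_. 1"] by simp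
  show ?case
  proof (cases "t mod \<tau> = 0")
    case True
    have r0: "(\<tau> - t mod \<tau>) mod \<tau> = 0" using True by simp
    have r1: "(\<tau> - Suc t mod \<tau>) mod \<tau> = \<tau> - 1"
      using True tau by (cases "\<tau> = 1") (auto simp: mod_Suc)
    have "(\<Sum>k<t. ce \<rho> t k) + 1 \<le> real \<tau> / (1 - q)" using Suc.IH r0 by simp
    then have "q * ((\<Sum>k<t. ce \<rho> t k) + 1) \<le> q * (real \<tau> / (1 - q))"
      using q by (intro mult_left_mono) auto
    also have "q * (real \<tau> / (1 - q)) = real \<tau> / (1 - q) - real \<tau>"
      using q by (simp add: field_simps)
    finally show ?thesis using sS True r1 tau unfolding \<rho>_def by (simp add: of_nat_diff)
  next
    case False
    have rr: "real ((\<tau> - Suc t mod \<tau>) mod \<tau>) = real ((\<tau> - t mod \<tau>) mod \<tau>) - 1"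
    proof -
      have lt: "t mod \<tau> < \<tau>" using tau by simp
      show ?thesis
      proof (cases "Suc (t mod \<tau>) = \<tau>")
        case True
        then show ?thesis using False by (simp add: mod_Suc)
      next
        case F2: False
        then have "Suc t mod \<tau> = Suc (t mod \<tau>)" by (simp add: mod_Suc)
        moreover have "\<tau> - Suc (t mod \<tau>) < \<tau>" "\<tau> - t mod \<tau> < \<tau>" using False lt by auto
        moreover have le: "Suc (t mod \<tau>) \<le> \<tau>" using lt by simp
        moreover have "real (\<tau> - Suc (t mod \<tau>)) = real \<tau> - real (Suc (t mod \<tau>))"
          by (rule of_nat_diff[OF le])
        moreover have "real (\<tau> - t mod \<tau>) = real \<tau> - real (t mod \<tau>)"
          using lt by (intro of_nat_diff) simp
        ultimately show ?thesis by simp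
      qed
    qed
    show ?thesis using sS False Suc.IH rr unfolding \<rho>_def by simp
  qed
qed

lemma sum_cm_bound:
  fixes q :: real and \<tau> :: nat
  assumes q: "0 \<le> q" "q < 1" and tau: "\<tau> \<ge> 1" and mu: "0 \<le> \<mu>" "\<mu> < 1"
  defines "\<rho> \<equiv> (\<lambda>t. if t mod \<tau> = 0 then q else 1)"
  shows "(\<Sum>k<t. cm \<rho> \<mu> t k) \<le> real \<tau> / (1 - q) / (1 - \<mu>)"
proof (induction t)
  case 0
  then show ?case using q mu by simp
next
  case (Suc t)
  have sS: "(\<Sum>k<Suc t. cm \<rho> \<mu> (Suc t) k) = \<mu> * (\<Sum>k<t. cm \<rho> \<mu> t k) + (\<Sum>k<t. ce \<rho> t k) + 1"
    using sum_cm_Suc[of \<rho> \<mu> t "\<lambda>_. 1"] by simp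
  have "(\<Sum>k<t. ce \<rho> t k) \<le> real \<tau> / (1 - q) - 1"
    using sum_ce_bound[OF q tau, of t] unfolding \<rho>_def by simp
  moreover have "\<mu> * (\<Sum>k<t. cm \<rho> \<mu> t k) \<le> \<mu> * (real \<tau> / (1 - q) / (1 - \<mu>))"
    using Suc.IH mu by (intro mult_left_mono) auto
  moreover have "\<mu> * (X / (1 - \<mu>)) + X = X / (1 - \<mu>)" for X
    using mu by (simp add: field_simps)
  note this[of "real \<tau> / (1 - q)"]
  ultimately show ?case unfolding sS by linarith
qed

lemma cs_weighted:
  fixes c a :: "nat \<Rightarrow> real"
  assumes "\<And>k. k \<in> A \<Longrightarrow> 0 \<le> c k"
  shows "(\<Sum>k\<in>A. c k * a k)\<^sup>2 \<le> (\<Sum>k\<in>A. c k) * (\<Sum>k\<in>A. c k * (a k)\<^sup>2)"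
proof -
  have "(\<Sum>k\<in>A. sqrt (c k) * (sqrt (c k) * a k))\<^sup>2 \<le> (\<Sum>k\<in>A. (sqrt (c k))\<^sup>2) * (\<Sum>k\<in>A. (sqrt (c k) * a k)\<^sup>2)"
    by (rule Cauchy_Schwarz_ineq_sum)
  moreover have "(\<Sum>k\<in>A. sqrt (c k) * (sqrt (c k) * a k)) = (\<Sum>k\<in>A. c k * a k)"
    using assms by (intro sum.cong) (auto simp: mult.assoc[symmetric])
  moreover have "(\<Sum>k\<in>A. (sqrt (c k))\<^sup>2) = (\<Sum>k\<in>A. c k)"
    using assms by (intro sum.cong) auto
  moreover have "(\<Sum>k\<in>A. (sqrt (c k) * a k)\<^sup>2) = (\<Sum>k\<in>A. c k * (a k)\<^sup>2)"
    using assms by (intro sum.cong) (auto simp: power_mult_distrib)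
  ultimately show ?thesis by simp
qed

lemma step_norms:
  fixes qrsel :: "real^('r::{finite,linorder})^'m \<Rightarrow> real^('r::{finite,linorder})^'m"
    and svsel :: "real^'n^'m \<Rightarrow> real^('r::{finite,linorder})^'m"
    and gradF :: "real^'n^'m \<Rightarrow> 'xi \<Rightarrow> real^'n^'m"
    and st :: "(real^'n^'m) \<times> (real^('r::{finite,linorder})^'n) \<times> (real^'n^'m) \<times> (nat \<Rightarrow> real^'n^'m)"
  assumes qr: "\<And>A. is_QR_factor A (qrsel A)" and sv: "\<And>Dl. is_top_left_sv Dl (svsel Dl)"
    and rn: "CARD('r) \<le> CARD('n)" and mu: "0 \<le> \<mu>"
  shows "norm (ebar N (snd (snd (snd (psgd_step qrsel svsel gradF N \<eta> \<mu> \<tau> t z st)))))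
           \<le> (if t mod \<tau> = 0 then 1 - real CARD('r) / real CARD('n) / 2 else 1) *
              (norm (gbar gradF N (fst st) z) + norm (ebar N (snd (snd (snd st)))))"
    and "norm (fst (snd (snd (psgd_step qrsel svsel gradF N \<eta> \<mu> \<tau> t z st))))
           \<le> \<mu> * norm (fst (snd (snd st))) + (norm (gbar gradF N (fst st) z) + norm (ebar N (snd (snd (snd st)))))"
proof -
  obtain X Qp mp e where st: "st = (X, Qp, mp, e)" by (cases st) auto
  define Dl where "Dl = gbar gradF N X z + ebar N e"
  define P where "P = (if t mod \<tau> \<noteq> 0 then qrsel ((1 / real N) *\<^sub>R (\<Sum>i<N. (gradF X (z i) + e i) ** Qp))
                else svsel Dl)"
  note eqs = step_eqs[where qrsel=qrsel and svsel=svsel and gradF=gradF and N=N and X=X and z=z and e=e and Qp=Qp and mp=mp and t=t and \<tau>=\<tau> and \<eta>=\<eta> and \<mu>=\<mu>, folded Dl_def, folded P_def]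
  have PP: "transpose P ** P = mat 1"
  proof (cases "t mod \<tau> = 0")
    case True
    then show ?thesis unfolding P_def using svd_facts(1)[OF sv] by simp
  next
    case False
    then show ?thesis unfolding P_def using qr by (simp add: is_QR_factor_def)
  qed
  have d0: "0 \<le> real CARD('r) / real CARD('n)" by simp
  have d1: "real CARD('r) / real CARD('n) \<le> 1" using rn by simp
  have Dle: "norm Dl \<le> norm (gbar gradF N X z) + norm (ebar N e)"
    unfolding Dl_def by (rule norm_triangle_ineq)
  have "norm (Dl - P ** transpose P ** Dl) \<le> (if t mod \<tau> = 0 then 1 - real CARD('r) / real CARD('n) / 2 else 1) * norm Dl"
  proof (cases "t mod \<tau> = 0")
    case True
    then show ?thesis unfolding P_def using svd_contract[OF sv rn] by simp
  next
    case False
    then show ?thesis using proj_le(2)[OF PP] by simp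
  qed
  also have "\<dots> \<le> (if t mod \<tau> = 0 then 1 - real CARD('r) / real CARD('n) / 2 else 1) *
              (norm (gbar gradF N X z) + norm (ebar N e))"
    using Dle d0 d1 by (intro mult_left_mono) auto
  finally show "norm (ebar N (snd (snd (snd (psgd_step qrsel svsel gradF N \<eta> \<mu> \<tau> t z st)))))
           \<le> (if t mod \<tau> = 0 then 1 - real CARD('r) / real CARD('n) / 2 else 1) *
              (norm (gbar gradF N (fst st) z) + norm (ebar N (snd (snd (snd st)))))"
    unfolding st eqs(1) by simp
  have "norm (\<mu> *\<^sub>R mp + P ** transpose P ** Dl) \<le> \<mu> * norm mp + norm Dl"
    using norm_triangle_ineq[of "\<mu> *\<^sub>R mp" "P ** transpose P ** Dl"] proj_le(1)[OF PP, of Dl] mu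
    by simp
  then show "norm (fst (snd (snd (psgd_step qrsel svsel gradF N \<eta> \<mu> \<tau> t z st))))
           \<le> \<mu> * norm (fst (snd (snd st))) + (norm (gbar gradF N (fst st) z) + norm (ebar N (snd (snd (snd st)))))"
    unfolding st eqs(2) using Dle by simp
qed

lemma path_mom_bound:
  fixes qrsel :: "real^('r::{finite,linorder})^'m \<Rightarrow> real^('r::{finite,linorder})^'m"
    and svsel :: "real^'n^'m \<Rightarrow> real^('r::{finite,linorder})^'m"
    and gradF :: "real^'n^'m \<Rightarrow> 'xi \<Rightarrow> real^'n^'m"
    and Q0 :: "real^('r::{finite,linorder})^'n"
    and xi :: "nat \<Rightarrow> nat \<Rightarrow> 'xi"
  assumes qr: "\<And>A. is_QR_factor A (qrsel A)" and sv: "\<And>Dl. is_top_left_sv Dl (svsel Dl)"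
    and rn: "CARD('r) \<le> CARD('n)" and mu: "0 \<le> \<mu>" "\<mu> < 1" and tau: "\<tau> \<ge> 1"
  shows "(norm (psgd_mom qrsel svsel gradF N \<eta> \<mu> \<tau> X0 Q0 xi t))\<^sup>2 \<le>
     (real \<tau> / (real CARD('r) / real CARD('n) / 2) / (1 - \<mu>)) *
     (\<Sum>k<Suc t. cm (\<lambda>t. if t mod \<tau> = 0 then 1 - real CARD('r) / real CARD('n) / 2 else 1) \<mu> (Suc t) k *
        (norm (gbar gradF N (fst (psgd_state qrsel svsel gradF N \<eta> \<mu> \<tau> X0 Q0 xi k)) (xi k)))\<^sup>2)"
proof -
  define q where "q = 1 - real CARD('r) / real CARD('n) / 2"
  define \<rho> where "\<rho> = (\<lambda>t. if t mod \<tau> = 0 then q else (1::real))"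
  define st where "st = psgd_state qrsel svsel gradF N \<eta> \<mu> \<tau> X0 Q0 xi"
  define a where "a = (\<lambda>k. norm (gbar gradF N (fst (st k)) (xi k)))"
  define E where "E = (\<lambda>k. norm (ebar N (snd (snd (snd (st k))))))"
  define Mm where "Mm = (\<lambda>k. norm (fst (snd (snd (st k)))))"
  have r0: "0 < real CARD('r)" by simp
  have d1: "real CARD('r) / real CARD('n) \<le> 1" using rn by simp
  have dpos: "0 < real CARD('r) / real CARD('n)" by simp
  have q: "0 \<le> q" "q < 1" unfolding q_def using d1 dpos by auto
  have rho0: "0 \<le> \<rho> t" for t unfolding \<rho>_def using q by auto
  have stS: "st (Suc k) = psgd_step qrsel svsel gradF N \<eta> \<mu> \<tau> k (xi k) (st k)" for k
    unfolding st_def by simp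
  have E0: "E 0 = 0" unfolding E_def st_def by (simp add: ebar_def)
  have M0: "Mm 0 = 0" unfolding Mm_def st_def by simp
  have Es: "E (Suc k) \<le> \<rho> k * (a k + E k)" for k
    unfolding E_def a_def \<rho>_def q_def stS by (rule step_norms(1)[OF qr sv rn mu(1)])
  have Ms: "Mm (Suc k) \<le> \<mu> * Mm k + a k + E k" for k
  proof -
    have "Mm (Suc k) \<le> \<mu> * Mm k + (a k + E k)"
      unfolding E_def a_def Mm_def stS by (rule step_norms(2)[OF qr sv rn mu(1)])
    then show ?thesis by (simp add: add.assoc)
  qed
  have pb: "Mm (Suc t) \<le> (\<Sum>k<Suc t. cm \<rho> \<mu> (Suc t) k * a k)"
    by (rule path_bound(2)[OF rho0 mu(1) E0 M0 Es Ms])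
  have cm0: "0 \<le> cm \<rho> \<mu> (Suc t) k" for k by (rule cm_nonneg[OF rho0 mu(1)])
  have "(Mm (Suc t))\<^sup>2 \<le> (\<Sum>k<Suc t. cm \<rho> \<mu> (Suc t) k * a k)\<^sup>2"
    using pb unfolding Mm_def by (intro power_mono) auto
  also have "\<dots> \<le> (\<Sum>k<Suc t. cm \<rho> \<mu> (Suc t) k) * (\<Sum>k<Suc t. cm \<rho> \<mu> (Suc t) k * (a k)\<^sup>2)"
    by (rule cs_weighted) (rule cm0)
  also have "\<dots> \<le> (real \<tau> / (1 - q) / (1 - \<mu>)) * (\<Sum>k<Suc t. cm \<rho> \<mu> (Suc t) k * (a k)\<^sup>2)"
    using sum_cm_bound[OF q tau mu, of "Suc t"] cm0
    by (intro mult_right_mono sum_nonneg) (auto simp: \<rho>_def)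
  finally show ?thesis
    unfolding Mm_def st_def psgd_mom_def a_def \<rho>_def q_def by simp
qed

lemma continuous_matmul: "continuous_on UNIV (\<lambda>x. fst x ** (snd x :: real^'p^'n) :: real^'p^'m)"
  unfolding matrix_matrix_mult_def
  by (intro continuous_intros)

lemma continuous_transpose: "continuous_on UNIV (\<lambda>x::real^'n^'m. transpose x)"
  unfolding transpose_def
  by (intro continuous_intros)

lemma borel_measurable_matmul[measurable (raw)]:
  fixes f :: "'a \<Rightarrow> real^'n^'m" and g :: "'a \<Rightarrow> real^'p^'n"
  assumes "f \<in> borel_measurable M" "g \<in> borel_measurable M"
  shows "(\<lambda>x. f x ** g x) \<in> borel_measurable M"
  using borel_measurable_continuous_Pair[OF assms continuous_matmul] by simp

lemma borel_measurable_transpose[measurable (raw)]: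
  fixes f :: "'a \<Rightarrow> real^'n^'m"
  assumes "f \<in> borel_measurable M"
  shows "(\<lambda>x. transpose (f x)) \<in> borel_measurable M"
  using borel_measurable_continuous_onI[OF continuous_transpose] assms
  by (rule measurable_compose[rotated])

lemma gradF_comp_meas:
  fixes gradF :: "real^'n^'m \<Rightarrow> 'xi \<Rightarrow> real^'n^'m"
  assumes gm: "(\<lambda>(X, z). gradF X z) \<in> borel_measurable (borel \<Otimes>\<^sub>M S)"
    and X: "X \<in> borel_measurable M" and z: "z \<in> measurable M S"
  shows "(\<lambda>w. gradF (X w) (z w)) \<in> borel_measurable M"
proof -
  have "(\<lambda>w. (X w, z w)) \<in> measurable M (borel \<Otimes>\<^sub>M S)" using X z by (rule measurable_Pair)
  from measurable_compose[OF this gm] show ?thesis by simp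
qed

lemma step_meas:
  fixes qrsel :: "real^('r::{finite,linorder})^'m \<Rightarrow> real^('r::{finite,linorder})^'m"
    and svsel :: "real^'n^'m \<Rightarrow> real^('r::{finite,linorder})^'m"
    and gradF :: "real^'n^'m \<Rightarrow> 'xi \<Rightarrow> real^'n^'m"
    and X :: "'a \<Rightarrow> real^'n^'m" and Qp :: "'a \<Rightarrow> real^('r::{finite,linorder})^'n"
    and mp :: "'a \<Rightarrow> real^'n^'m" and e :: "'a \<Rightarrow> nat \<Rightarrow> real^'n^'m"
    and t \<tau> N :: nat and \<eta> \<mu> :: real and z :: "'a \<Rightarrow> nat \<Rightarrow> 'xi"
  assumes gm: "(\<lambda>(X, z). gradF X z) \<in> borel_measurable (borel \<Otimes>\<^sub>M S)"
    and qm: "qrsel \<in> borel_measurable borel" and sm: "svsel \<in> borel_measurable borel"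
    and X: "X \<in> borel_measurable M" and Qp: "Qp \<in> borel_measurable M"
    and mp: "mp \<in> borel_measurable M" and e: "\<And>i. i < N \<Longrightarrow> (\<lambda>w. e w i) \<in> borel_measurable M"
    and z: "\<And>i. i < N \<Longrightarrow> (\<lambda>w. z w i) \<in> measurable M S"
  defines "nx \<equiv> (\<lambda>w. psgd_step qrsel svsel gradF N \<eta> \<mu> \<tau> t (z w) (X w, Qp w, mp w, e w))"
  shows "(\<lambda>w. fst (nx w)) \<in> borel_measurable M"
    and "(\<lambda>w. fst (snd (nx w))) \<in> borel_measurable M"
    and "(\<lambda>w. fst (snd (snd (nx w)))) \<in> borel_measurable M"
    and "\<And>i. i < N \<Longrightarrow> (\<lambda>w. snd (snd (snd (nx w))) i) \<in> borel_measurable M"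
proof -
  have g: "(\<lambda>w. gradF (X w) (z w i)) \<in> borel_measurable M" if "i < N" for i
    using gradF_comp_meas[OF gm X z[OF that]] .
  have Di: "(\<lambda>w. gradF (X w) (z w i) + e w i) \<in> borel_measurable M" if "i < N" for i
    using g[OF that] e[OF that] by measurable
  have Dl: "(\<lambda>w. (1 / real N) *\<^sub>R (\<Sum>i<N. gradF (X w) (z w i) + e w i)) \<in> borel_measurable M"
    using Di by measurable
  define P where "P = (\<lambda>w. if t mod \<tau> \<noteq> 0 then qrsel ((1 / real N) *\<^sub>R (\<Sum>i<N. (gradF (X w) (z w i) + e w i) ** Qp w))
                else svsel ((1 / real N) *\<^sub>R (\<Sum>i<N. gradF (X w) (z w i) + e w i)))"
  have Pm: "P \<in> borel_measurable M"
  proof (cases "t mod \<tau> = 0")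
    case True
    then have "P = (\<lambda>w. svsel ((1 / real N) *\<^sub>R (\<Sum>i<N. gradF (X w) (z w i) + e w i)))"
      unfolding P_def by simp
    then show ?thesis using measurable_compose[OF Dl sm] by simp
  next
    case False
    then have "P = (\<lambda>w. qrsel ((1 / real N) *\<^sub>R (\<Sum>i<N. (gradF (X w) (z w i) + e w i) ** Qp w)))"
      unfolding P_def by simp
    moreover have "(\<lambda>w. (1 / real N) *\<^sub>R (\<Sum>i<N. (gradF (X w) (z w i) + e w i) ** Qp w)) \<in> borel_measurable M"
      using Di Qp by measurable
    ultimately show ?thesis using measurable_compose[OF _ qm] by simp
  qed
  have Qm: "(\<lambda>w. (1 / real N) *\<^sub>R (\<Sum>i<N. transpose (gradF (X w) (z w i) + e w i) ** P w)) \<in> borel_measurable M"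
    using Di Pm by measurable
  have nxe: "nx = (\<lambda>w. (X w - \<eta> *\<^sub>R (\<mu> *\<^sub>R mp w + P w ** transpose ((1 / real N) *\<^sub>R (\<Sum>i<N. transpose (gradF (X w) (z w i) + e w i) ** P w))),
      (1 / real N) *\<^sub>R (\<Sum>i<N. transpose (gradF (X w) (z w i) + e w i) ** P w),
      \<mu> *\<^sub>R mp w + P w ** transpose ((1 / real N) *\<^sub>R (\<Sum>i<N. transpose (gradF (X w) (z w i) + e w i) ** P w)),
      (\<lambda>i. (gradF (X w) (z w i) + e w i) - P w ** transpose (P w) ** (gradF (X w) (z w i) + e w i))))"
    unfolding nx_def psgd_step_def Let_def P_def by simp
  show "(\<lambda>w. fst (nx w)) \<in> borel_measurable M"
    unfolding nxe using X mp Pm Qm by simp measurable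
  show "(\<lambda>w. fst (snd (nx w))) \<in> borel_measurable M"
    unfolding nxe using Qm by simp
  show "(\<lambda>w. fst (snd (snd (nx w)))) \<in> borel_measurable M"
    unfolding nxe using mp Pm Qm by simp measurable
  show "(\<lambda>w. snd (snd (snd (nx w))) i) \<in> borel_measurable M" if "i < N" for i
    unfolding nxe using Di[OF that] Pm by simp measurable
qed


lemma state_meas:
  fixes qrsel :: "real^('r::{finite,linorder})^'m \<Rightarrow> real^('r::{finite,linorder})^'m"
    and svsel :: "real^'n^'m \<Rightarrow> real^('r::{finite,linorder})^'m"
    and gradF :: "real^'n^'m \<Rightarrow> 'xi \<Rightarrow> real^'n^'m"
    and Q0 :: "real^('r::{finite,linorder})^'n"
    and xi' :: "nat \<Rightarrow> nat \<Rightarrow> 'a \<Rightarrow> 'xi"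
  assumes gm: "(\<lambda>(X, z). gradF X z) \<in> borel_measurable (borel \<Otimes>\<^sub>M S)"
    and qm: "qrsel \<in> borel_measurable borel" and sm: "svsel \<in> borel_measurable borel"
  shows "(\<forall>s<t. \<forall>i<N. xi' s i \<in> measurable M S) \<longrightarrow>
     (\<lambda>w. fst (psgd_state qrsel svsel gradF N \<eta> \<mu> \<tau> X0 Q0 (\<lambda>s i. xi' s i w) t)) \<in> borel_measurable M \<and>
     (\<lambda>w. fst (snd (psgd_state qrsel svsel gradF N \<eta> \<mu> \<tau> X0 Q0 (\<lambda>s i. xi' s i w) t))) \<in> borel_measurable M \<and>
     (\<lambda>w. fst (snd (snd (psgd_state qrsel svsel gradF N \<eta> \<mu> \<tau> X0 Q0 (\<lambda>s i. xi' s i w) t)))) \<in> borel_measurable M \<and>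
     (\<forall>i<N. (\<lambda>w. snd (snd (snd (psgd_state qrsel svsel gradF N \<eta> \<mu> \<tau> X0 Q0 (\<lambda>s i. xi' s i w) t))) i) \<in> borel_measurable M)"
proof (induction t)
  case 0
  then show ?case by simp
next
  case (Suc t)
  show ?case
  proof
    assume H: "\<forall>s<Suc t. \<forall>i<N. xi' s i \<in> measurable M S"
    define st where "st = (\<lambda>w. psgd_state qrsel svsel gradF N \<eta> \<mu> \<tau> X0 Q0 (\<lambda>s i. xi' s i w) t)"
    have IH: "(\<lambda>w. fst (st w)) \<in> borel_measurable M" "(\<lambda>w. fst (snd (st w))) \<in> borel_measurable M"
      "(\<lambda>w. fst (snd (snd (st w)))) \<in> borel_measurable M"
      "\<And>i. i < N \<Longrightarrow> (\<lambda>w. snd (snd (snd (st w))) i) \<in> borel_measurable M"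
      using Suc.IH H unfolding st_def by auto
    have z: "\<And>i. i < N \<Longrightarrow> (\<lambda>w. xi' t i w) \<in> measurable M S" using H by auto
    have eq: "psgd_state qrsel svsel gradF N \<eta> \<mu> \<tau> X0 Q0 (\<lambda>s i. xi' s i w) (Suc t) =
      psgd_step qrsel svsel gradF N \<eta> \<mu> \<tau> t (\<lambda>i. xi' t i w)
        (fst (st w), fst (snd (st w)), fst (snd (snd (st w))), snd (snd (snd (st w))))" for w
      unfolding st_def by simp
    note sm' = step_meas[where X="\<lambda>w. fst (st w)" and Qp="\<lambda>w. fst (snd (st w))" and mp="\<lambda>w. fst (snd (snd (st w)))"
      and e="\<lambda>w. snd (snd (snd (st w)))" and z="\<lambda>w i. xi' t i w" and N=N and t=t and \<tau>=\<tau> and \<eta>=\<eta> and \<mu>=\<mu>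
      and qrsel=qrsel and svsel=svsel and gradF=gradF and M=M and S=S, OF gm qm sm IH(1) IH(2) IH(3) IH(4) z]
    show "(\<lambda>w. fst (psgd_state qrsel svsel gradF N \<eta> \<mu> \<tau> X0 Q0 (\<lambda>s i. xi' s i w) (Suc t))) \<in> borel_measurable M \<and>
     (\<lambda>w. fst (snd (psgd_state qrsel svsel gradF N \<eta> \<mu> \<tau> X0 Q0 (\<lambda>s i. xi' s i w) (Suc t)))) \<in> borel_measurable M \<and>
     (\<lambda>w. fst (snd (snd (psgd_state qrsel svsel gradF N \<eta> \<mu> \<tau> X0 Q0 (\<lambda>s i. xi' s i w) (Suc t))))) \<in> borel_measurable M \<and>
     (\<forall>i<N. (\<lambda>w. snd (snd (snd (psgd_state qrsel svsel gradF N \<eta> \<mu> \<tau> X0 Q0 (\<lambda>s i. xi' s i w) (Suc t)))) i) \<in> borel_measurable M)"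
      unfolding eq using sm' by blast
  qed
qed

lemma step_local:
  fixes qrsel :: "real^('r::{finite,linorder})^'m \<Rightarrow> real^('r::{finite,linorder})^'m"
    and svsel :: "real^'n^'m \<Rightarrow> real^('r::{finite,linorder})^'m"
    and gradF :: "real^'n^'m \<Rightarrow> 'xi \<Rightarrow> real^'n^'m"
    and Q :: "real^('r::{finite,linorder})^'n"
  assumes z: "\<forall>i<N. z i = z' i" and e: "\<forall>i<N. e i = e' i"
  shows "fst (psgd_step qrsel svsel gradF N \<eta> \<mu> \<tau> t z (X, Q, m, e)) = fst (psgd_step qrsel svsel gradF N \<eta> \<mu> \<tau> t z' (X, Q, m, e'))"
    and "fst (snd (psgd_step qrsel svsel gradF N \<eta> \<mu> \<tau> t z (X, Q, m, e))) = fst (snd (psgd_step qrsel svsel gradF N \<eta> \<mu> \<tau> t z' (X, Q, m, e')))"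
    and "fst (snd (snd (psgd_step qrsel svsel gradF N \<eta> \<mu> \<tau> t z (X, Q, m, e)))) = fst (snd (snd (psgd_step qrsel svsel gradF N \<eta> \<mu> \<tau> t z' (X, Q, m, e'))))"
    and "\<forall>i<N. snd (snd (snd (psgd_step qrsel svsel gradF N \<eta> \<mu> \<tau> t z (X, Q, m, e)))) i = snd (snd (snd (psgd_step qrsel svsel gradF N \<eta> \<mu> \<tau> t z' (X, Q, m, e')))) i"
proof -
  have s1: "(\<Sum>i<N. gradF X (z i) + e i) = (\<Sum>i<N. gradF X (z' i) + e' i)"
    using z e by (intro sum.cong) auto
  have s2: "(\<Sum>i<N. (gradF X (z i) + e i) ** Q) = (\<Sum>i<N. (gradF X (z' i) + e' i) ** Q)"
    using z e by (intro sum.cong) auto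
  have s3: "(\<Sum>i<N. transpose (gradF X (z i) + e i) ** P) = (\<Sum>i<N. transpose (gradF X (z' i) + e' i) ** P)" for P
    using z e by (intro sum.cong) auto
  show "fst (psgd_step qrsel svsel gradF N \<eta> \<mu> \<tau> t z (X, Q, m, e)) = fst (psgd_step qrsel svsel gradF N \<eta> \<mu> \<tau> t z' (X, Q, m, e'))"
    unfolding psgd_step_def Let_def prod.case s1 s2 s3 by simp
  show "fst (snd (psgd_step qrsel svsel gradF N \<eta> \<mu> \<tau> t z (X, Q, m, e))) = fst (snd (psgd_step qrsel svsel gradF N \<eta> \<mu> \<tau> t z' (X, Q, m, e')))"
    unfolding psgd_step_def Let_def prod.case s1 s2 s3 by simp
  show "fst (snd (snd (psgd_step qrsel svsel gradF N \<eta> \<mu> \<tau> t z (X, Q, m, e)))) = fst (snd (snd (psgd_step qrsel svsel gradF N \<eta> \<mu> \<tau> t z' (X, Q, m, e'))))"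
    unfolding psgd_step_def Let_def prod.case s1 s2 s3 by simp
  show "\<forall>i<N. snd (snd (snd (psgd_step qrsel svsel gradF N \<eta> \<mu> \<tau> t z (X, Q, m, e)))) i = snd (snd (snd (psgd_step qrsel svsel gradF N \<eta> \<mu> \<tau> t z' (X, Q, m, e')))) i"
    unfolding psgd_step_def Let_def prod.case s1 s2 s3 using z e by simp
qed

lemma state_local:
  fixes qrsel :: "real^('r::{finite,linorder})^'m \<Rightarrow> real^('r::{finite,linorder})^'m"
    and svsel :: "real^'n^'m \<Rightarrow> real^('r::{finite,linorder})^'m"
    and gradF :: "real^'n^'m \<Rightarrow> 'xi \<Rightarrow> real^'n^'m"
    and Q0 :: "real^('r::{finite,linorder})^'n"
  shows "(\<forall>s<t. \<forall>i<N. xi s i = xi' s i) \<longrightarrow>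
    fst (psgd_state qrsel svsel gradF N \<eta> \<mu> \<tau> X0 Q0 xi t) = fst (psgd_state qrsel svsel gradF N \<eta> \<mu> \<tau> X0 Q0 xi' t) \<and>
    fst (snd (psgd_state qrsel svsel gradF N \<eta> \<mu> \<tau> X0 Q0 xi t)) = fst (snd (psgd_state qrsel svsel gradF N \<eta> \<mu> \<tau> X0 Q0 xi' t)) \<and>
    fst (snd (snd (psgd_state qrsel svsel gradF N \<eta> \<mu> \<tau> X0 Q0 xi t))) = fst (snd (snd (psgd_state qrsel svsel gradF N \<eta> \<mu> \<tau> X0 Q0 xi' t))) \<and>
    (\<forall>i<N. snd (snd (snd (psgd_state qrsel svsel gradF N \<eta> \<mu> \<tau> X0 Q0 xi t))) i = snd (snd (snd (psgd_state qrsel svsel gradF N \<eta> \<mu> \<tau> X0 Q0 xi' t))) i)"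
proof (induction t)
  case 0
  then show ?case by simp
next
  case (Suc t)
  show ?case
  proof
    assume H: "\<forall>s<Suc t. \<forall>i<N. xi s i = xi' s i"
    define st where "st = psgd_state qrsel svsel gradF N \<eta> \<mu> \<tau> X0 Q0 xi t"
    define st' where "st' = psgd_state qrsel svsel gradF N \<eta> \<mu> \<tau> X0 Q0 xi' t"
    obtain X Q m e where A: "st = (X, Q, m, e)" by (cases st) auto
    obtain X' Q' m' e' where B: "st' = (X', Q', m', e')" by (cases st') auto
    have IH: "X = X'" "Q = Q'" "m = m'" "\<forall>i<N. e i = e' i"
      using Suc.IH H A B unfolding st_def st'_def by auto
    have z: "\<forall>i<N. xi t i = xi' t i" using H by auto
    have eq1: "psgd_state qrsel svsel gradF N \<eta> \<mu> \<tau> X0 Q0 xi (Suc t) = psgd_step qrsel svsel gradF N \<eta> \<mu> \<tau> t (xi t) (X, Q, m, e)"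
      using A unfolding st_def by simp
    have eq2: "psgd_state qrsel svsel gradF N \<eta> \<mu> \<tau> X0 Q0 xi' (Suc t) = psgd_step qrsel svsel gradF N \<eta> \<mu> \<tau> t (xi' t) (X, Q, m, e')"
      using B IH unfolding st'_def by simp
    show "fst (psgd_state qrsel svsel gradF N \<eta> \<mu> \<tau> X0 Q0 xi (Suc t)) = fst (psgd_state qrsel svsel gradF N \<eta> \<mu> \<tau> X0 Q0 xi' (Suc t)) \<and>
    fst (snd (psgd_state qrsel svsel gradF N \<eta> \<mu> \<tau> X0 Q0 xi (Suc t))) = fst (snd (psgd_state qrsel svsel gradF N \<eta> \<mu> \<tau> X0 Q0 xi' (Suc t))) \<and>
    fst (snd (snd (psgd_state qrsel svsel gradF N \<eta> \<mu> \<tau> X0 Q0 xi (Suc t)))) = fst (snd (snd (psgd_state qrsel svsel gradF N \<eta> \<mu> \<tau> X0 Q0 xi' (Suc t)))) \<and>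
    (\<forall>i<N. snd (snd (snd (psgd_state qrsel svsel gradF N \<eta> \<mu> \<tau> X0 Q0 xi (Suc t)))) i = snd (snd (snd (psgd_state qrsel svsel gradF N \<eta> \<mu> \<tau> X0 Q0 xi' (Suc t)))) i)"
      unfolding eq1 eq2 using step_local[where qrsel=qrsel and svsel=svsel and gradF=gradF and \<eta>=\<eta> and \<mu>=\<mu> and \<tau>=\<tau> and t=t and X=X and Q=Q and m=m, OF z IH(4)] by blast
  qed
qed

lemma Z_distr:
  fixes M :: "'w measure" and S :: "'xi measure" and D :: "nat \<Rightarrow> 'xi measure"
    and xi :: "nat \<Rightarrow> nat \<Rightarrow> 'w \<Rightarrow> 'xi"
  assumes N: "N \<ge> 1" and M: "prob_space M"
    and D: "\<And>i. i < N \<Longrightarrow> prob_space (D i)" "\<And>i. i < N \<Longrightarrow> sets (D i) = sets S"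
    and xi_meas: "\<And>t i. i < N \<Longrightarrow> xi t i \<in> measurable M S"
    and xi_distr: "\<And>t i. i < N \<Longrightarrow> distr M (D i) (xi t i) = D i"
    and xi_indep: "prob_space.indep_vars M (\<lambda>_. S) (\<lambda>(t, i). xi t i) (UNIV \<times> {..<N})"
  shows "distr M (PiM {..<N} (\<lambda>_. S)) (\<lambda>w. restrict (\<lambda>i. xi k i w) {..<N}) = PiM {..<N} D"
proof -
  interpret prob_space M by (rule M)
  define B where "B = {k} \<times> {..<N}"
  define Y where "Y = (\<lambda>(t, i). xi t i)"
  have indB: "indep_vars (\<lambda>_. S) Y B"
    unfolding B_def by (rule indep_vars_subset[OF xi_indep[folded Y_def]]) auto
  have rvY: "random_variable S (Y p)" if "p \<in> B" for p
    using that xi_meas unfolding B_def Y_def by auto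
  have "0 \<in> {..<N}" using N by simp
  then have Bne: "B \<noteq> {}" unfolding B_def by blast
  define Mp where "Mp = (\<lambda>p. distr M S (Y p))"
  have dB: "distr M (PiM B (\<lambda>_. S)) (\<lambda>x. \<lambda>p\<in>B. Y p x) = PiM B Mp"
    using indep_vars_iff_distr_eq_PiM'[OF Bne rvY] indB unfolding Mp_def by simp
  define \<Psi> where "\<Psi> = (\<lambda>f::nat \<times> nat \<Rightarrow> 'xi. \<lambda>n\<in>{..<N}. f (k, n))"
  have \<Psi>m: "\<Psi> \<in> measurable (PiM B (\<lambda>_. S)) (PiM {..<N} (\<lambda>_. S))"
    unfolding \<Psi>_def B_def by (intro measurable_restrict measurable_component_singleton) auto
  have RBm: "(\<lambda>x. \<lambda>p\<in>B. Y p x) \<in> measurable M (PiM B (\<lambda>_. S))"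
    using rvY by (intro measurable_restrict) auto
  have comp: "(\<Psi> \<circ> (\<lambda>x. \<lambda>p\<in>B. Y p x)) = (\<lambda>w. restrict (\<lambda>i. xi k i w) {..<N})"
    unfolding \<Psi>_def B_def Y_def by (auto simp: fun_eq_iff)
  have "distr M (PiM {..<N} (\<lambda>_. S)) (\<lambda>w. restrict (\<lambda>i. xi k i w) {..<N})
      = distr (distr M (PiM B (\<lambda>_. S)) (\<lambda>x. \<lambda>p\<in>B. Y p x)) (PiM {..<N} (\<lambda>_. S)) \<Psi>"
    using distr_distr[OF \<Psi>m RBm] comp by simp
  also have "\<dots> = distr (PiM B Mp) (PiM {..<N} (\<lambda>_. S)) \<Psi>" unfolding dB ..
  also have "\<dots> = distr (PiM B Mp) (PiM {..<N} (\<lambda>i. Mp (k, i))) (\<lambda>\<omega>. \<lambda>n\<in>{..<N}. \<omega> (k, n))"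
    unfolding \<Psi>_def
    by (intro distr_cong refl sets_PiM_cong) (auto simp: Mp_def)
  also have "\<dots> = PiM {..<N} (\<lambda>i. Mp (k, i))"
    unfolding B_def
    by (intro distr_PiM_reindex) (auto simp: Mp_def inj_on_def intro!: prob_space_distr rvY[unfolded B_def])
  also have "\<dots> = PiM {..<N} D"
  proof (intro PiM_cong refl)
    fix i assume "i \<in> {..<N}"
    then have i: "i < N" by simp
    have "Mp (k, i) = distr M (D i) (xi k i)"
      unfolding Mp_def Y_def using D(2)[OF i] by (intro distr_cong) auto
    then show "Mp (k, i) = D i" using xi_distr[OF i] by simp
  qed
  finally show ?thesis .
qed

lemma grad_expect:
  fixes M :: "'w measure" and S :: "'xi measure" and D :: "nat \<Rightarrow> 'xi measure"
    and xi :: "nat \<Rightarrow> nat \<Rightarrow> 'w \<Rightarrow> 'xi"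
    and gradF :: "real^'n^'m \<Rightarrow> 'xi \<Rightarrow> real^'n^'m"
    and qrsel :: "real^('r::{finite,linorder})^'m \<Rightarrow> real^('r::{finite,linorder})^'m"
    and svsel :: "real^'n^'m \<Rightarrow> real^('r::{finite,linorder})^'m"
    and Q0 :: "real^('r::{finite,linorder})^'n"
  assumes N: "N \<ge> 1" and M: "prob_space M"
    and D: "\<And>i. i < N \<Longrightarrow> prob_space (D i)" "\<And>i. i < N \<Longrightarrow> sets (D i) = sets S"
    and xi_meas: "\<And>t i. i < N \<Longrightarrow> xi t i \<in> measurable M S"
    and xi_distr: "\<And>t i. i < N \<Longrightarrow> distr M (D i) (xi t i) = D i"
    and xi_indep: "prob_space.indep_vars M (\<lambda>_. S) (\<lambda>(t, i). xi t i) (UNIV \<times> {..<N})"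
    and gm: "(\<lambda>(X, z). gradF X z) \<in> borel_measurable (borel \<Otimes>\<^sub>M S)"
    and A3_G: "\<And>X. (\<integral>\<^sup>+ z. ennreal ((norm ((1 / real N) *\<^sub>R (\<Sum>i<N. gradF X (z i))))\<^sup>2)
                      \<partial>(PiM {..<N} D)) \<le> ennreal G2"
    and qm: "qrsel \<in> borel_measurable borel" and sm: "svsel \<in> borel_measurable borel"
  shows "(\<lambda>w. ennreal ((norm (gbar gradF N (fst (psgd_state qrsel svsel gradF N \<eta> \<mu> \<tau> X0 Q0 (\<lambda>s i. xi s i w) k)) (\<lambda>i. xi k i w)))\<^sup>2)) \<in> borel_measurable M"
    and "(\<integral>\<^sup>+ w. ennreal ((norm (gbar gradF N (fst (psgd_state qrsel svsel gradF N \<eta> \<mu> \<tau> X0 Q0 (\<lambda>s i. xi s i w) k)) (\<lambda>i. xi k i w)))\<^sup>2) \<partial>M) \<le> ennreal G2"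
proof -
  interpret prob_space M by (rule M)
  define A where "A = {..<k} \<times> {..<N}"
  define B where "B = {k} \<times> {..<N}"
  define Y where "Y = (\<lambda>(t, i). xi t i)"
  define Xk where "Xk = (\<lambda>w. fst (psgd_state qrsel svsel gradF N \<eta> \<mu> \<tau> X0 Q0 (\<lambda>s i. xi s i w) k))"
  define \<Phi> where "\<Phi> = (\<lambda>f::nat \<times> nat \<Rightarrow> 'xi. fst (psgd_state qrsel svsel gradF N \<eta> \<mu> \<tau> X0 Q0 (\<lambda>s i. f (s, i)) k))"
  define \<Psi> where "\<Psi> = (\<lambda>f::nat \<times> nat \<Rightarrow> 'xi. \<lambda>n\<in>{..<N}. f (k, n))"
  define Z where "Z = (\<lambda>w. restrict (\<lambda>i. xi k i w) {..<N})"
  define \<phi> where "\<phi> = (\<lambda>p::(real^'n^'m) \<times> (nat \<Rightarrow> 'xi). ennreal ((norm (gbar gradF N (fst p) (snd p)))\<^sup>2))"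
  have Xkm: "Xk \<in> borel_measurable M"
    using state_meas[OF gm qm sm, where M=M and xi'=xi and t=k and N=N] xi_meas
    unfolding Xk_def by blast
  have \<Phi>m: "\<Phi> \<in> borel_measurable (PiM A (\<lambda>_. S))"
  proof -
    have "\<forall>s<k. \<forall>i<N. (\<lambda>f::nat \<times> nat \<Rightarrow> 'xi. f (s, i)) \<in> measurable (PiM A (\<lambda>_. S)) S"
      unfolding A_def by (auto intro!: measurable_component_singleton)
    then show ?thesis
      using state_meas[OF gm qm sm, where M="PiM A (\<lambda>_. S)" and xi'="\<lambda>s i f. f (s, i)" and t=k and N=N]
      unfolding \<Phi>_def by blast
  qed
  have \<Psi>m: "\<Psi> \<in> measurable (PiM B (\<lambda>_. S)) (PiM {..<N} (\<lambda>_. S))"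
    unfolding \<Psi>_def B_def by (intro measurable_restrict measurable_component_singleton) auto
  have ind0: "indep_var (PiM A (\<lambda>_. S)) (\<lambda>w. restrict (\<lambda>p. Y p w) A) (PiM B (\<lambda>_. S)) (\<lambda>w. restrict (\<lambda>p. Y p w) B)"
    by (rule indep_var_restrict[OF xi_indep[folded Y_def]]) (auto simp: A_def B_def)
  have e1: "\<Phi> \<circ> (\<lambda>w. restrict (\<lambda>p. Y p w) A) = Xk"
  proof
    fix w
    have "\<forall>s<k. \<forall>i<N. restrict (\<lambda>p. Y p w) A (s, i) = xi s i w"
      unfolding A_def Y_def by auto
    then show "(\<Phi> \<circ> (\<lambda>w. restrict (\<lambda>p. Y p w) A)) w = Xk w"
      using state_local[where qrsel=qrsel and svsel=svsel and gradF=gradF and N=N and \<eta>=\<eta> and \<mu>=\<mu> and \<tau>=\<tau>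
        and ?X0.0=X0 and ?Q0.0=Q0 and t=k and xi="\<lambda>s i. restrict (\<lambda>p. Y p w) A (s, i)" and xi'="\<lambda>s i. xi s i w"]
      unfolding \<Phi>_def Xk_def by simp
  qed
  have e2: "\<Psi> \<circ> (\<lambda>w. restrict (\<lambda>p. Y p w) B) = Z"
    unfolding \<Psi>_def Z_def B_def Y_def by (auto simp: fun_eq_iff)
  define RA where "RA = (\<lambda>w. restrict (\<lambda>p. Y p w) A)"
  define RB where "RB = (\<lambda>w. restrict (\<lambda>p. Y p w) B)"
  have RAm: "RA \<in> measurable M (PiM A (\<lambda>_. S))"
    unfolding RA_def Y_def A_def using xi_meas by (intro measurable_restrict) auto
  have RBm: "RB \<in> measurable M (PiM B (\<lambda>_. S))"
    unfolding RB_def Y_def B_def using xi_meas by (intro measurable_restrict) auto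
  have joint0: "distr M (PiM A (\<lambda>_. S)) RA \<Otimes>\<^sub>M distr M (PiM B (\<lambda>_. S)) RB
      = distr M (PiM A (\<lambda>_. S) \<Otimes>\<^sub>M PiM B (\<lambda>_. S)) (\<lambda>x. (RA x, RB x))"
    using ind0 unfolding indep_var_distribution_eq RA_def RB_def by blast
  have PRB: "prob_space (distr (distr M (PiM B (\<lambda>_. S)) RB) (PiM {..<N} (\<lambda>_. S)) \<Psi>)"
  proof -
    have PRB0: "prob_space (distr M (PiM B (\<lambda>_. S)) RB)" by (rule prob_space_distr[OF RBm])
    show ?thesis by (rule prob_space.prob_space_distr[OF PRB0]) (use \<Psi>m in simp)
  qed
  have "distr M (borel \<Otimes>\<^sub>M PiM {..<N} (\<lambda>_. S)) (\<lambda>x. (Xk x, Z x))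
      = distr (distr M (PiM A (\<lambda>_. S) \<Otimes>\<^sub>M PiM B (\<lambda>_. S)) (\<lambda>x. (RA x, RB x)))
          (borel \<Otimes>\<^sub>M PiM {..<N} (\<lambda>_. S)) (\<lambda>(x, y). (\<Phi> x, \<Psi> y))"
  proof -
    have m1: "(\<lambda>(x, y). (\<Phi> x, \<Psi> y)) \<in> measurable (PiM A (\<lambda>_. S) \<Otimes>\<^sub>M PiM B (\<lambda>_. S)) (borel \<Otimes>\<^sub>M PiM {..<N} (\<lambda>_. S))"
      using \<Phi>m \<Psi>m by measurable
    have m2: "(\<lambda>x. (RA x, RB x)) \<in> measurable M (PiM A (\<lambda>_. S) \<Otimes>\<^sub>M PiM B (\<lambda>_. S))"
      using RAm RBm by (rule measurable_Pair)
    have "(\<lambda>(x, y). (\<Phi> x, \<Psi> y)) \<circ> (\<lambda>x. (RA x, RB x)) = (\<lambda>x. (Xk x, Z x))"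
      using e1 e2 unfolding RA_def RB_def by (auto simp: fun_eq_iff)
    then show ?thesis using distr_distr[OF m1 m2] by simp
  qed
  also have "\<dots> = distr (distr M (PiM A (\<lambda>_. S)) RA) borel \<Phi> \<Otimes>\<^sub>M distr (distr M (PiM B (\<lambda>_. S)) RB) (PiM {..<N} (\<lambda>_. S)) \<Psi>"
    unfolding joint0[symmetric]
    by (rule pair_measure_distr[symmetric]) (use \<Phi>m \<Psi>m PRB in \<open>auto intro: prob_space_imp_sigma_finite\<close>)
  also have "\<dots> = distr M borel Xk \<Otimes>\<^sub>M distr M (PiM {..<N} (\<lambda>_. S)) Z"
    using distr_distr[OF \<Phi>m RAm] distr_distr[OF \<Psi>m RBm] e1 e2 unfolding RA_def RB_def by simp
  finally have joint: "distr M borel Xk \<Otimes>\<^sub>M distr M (PiM {..<N} (\<lambda>_. S)) Z = distr M (borel \<Otimes>\<^sub>M PiM {..<N} (\<lambda>_. S)) (\<lambda>x. (Xk x, Z x))"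
    by simp
  have Zd: "distr M (PiM {..<N} (\<lambda>_. S)) Z = PiM {..<N} D"
    unfolding Z_def by (rule Z_distr[OF N M D xi_meas xi_distr xi_indep])
  have Zm: "Z \<in> measurable M (PiM {..<N} (\<lambda>_. S))"
    unfolding Z_def using xi_meas by (intro measurable_restrict) auto
  have \<phi>m: "\<phi> \<in> borel_measurable (borel \<Otimes>\<^sub>M PiM {..<N} (\<lambda>_. S))"
  proof -
    have "(\<lambda>p. gradF (fst p) (snd p i)) \<in> borel_measurable (borel \<Otimes>\<^sub>M PiM {..<N} (\<lambda>_. S))" if "i < N" for i
    proof (rule gradF_comp_meas[OF gm])
      show "fst \<in> borel_measurable (borel \<Otimes>\<^sub>M Pi\<^sub>M {..<N} (\<lambda>_. S))" by (rule measurable_fst)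
      show "(\<lambda>p. snd p i) \<in> measurable (borel \<Otimes>\<^sub>M Pi\<^sub>M {..<N} (\<lambda>_. S)) S"
        using that by (intro measurable_compose[OF measurable_snd] measurable_component_singleton) auto
    qed
    then show ?thesis unfolding \<phi>_def gbar_def by measurable
  qed
  have integrand: "ennreal ((norm (gbar gradF N (fst (psgd_state qrsel svsel gradF N \<eta> \<mu> \<tau> X0 Q0 (\<lambda>s i. xi s i w) k)) (\<lambda>i. xi k i w)))\<^sup>2)
      = \<phi> (Xk w, Z w)" for w
  proof -
    have "gbar gradF N (Xk w) (\<lambda>i. xi k i w) = gbar gradF N (Xk w) (Z w)"
      unfolding gbar_def Z_def by (intro arg_cong[where f="\<lambda>x. _ *\<^sub>R x"] sum.cong) auto
    then show ?thesis unfolding \<phi>_def Xk_def by simp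
  qed
  have pm: "(\<lambda>x. (Xk x, Z x)) \<in> measurable M (borel \<Otimes>\<^sub>M PiM {..<N} (\<lambda>_. S))"
    using Xkm Zm by (rule measurable_Pair)
  show "(\<lambda>w. ennreal ((norm (gbar gradF N (fst (psgd_state qrsel svsel gradF N \<eta> \<mu> \<tau> X0 Q0 (\<lambda>s i. xi s i w) k)) (\<lambda>i. xi k i w)))\<^sup>2)) \<in> borel_measurable M"
    unfolding integrand using measurable_compose[OF pm \<phi>m] by simp
  interpret PD: prob_space "PiM {..<N} D" by (rule prob_space_PiM) (use D in auto)
  interpret DX: prob_space "distr M borel Xk" by (rule prob_space_distr[OF Xkm])
  have setsP: "sets (distr M borel Xk \<Otimes>\<^sub>M PiM {..<N} D) = sets (borel \<Otimes>\<^sub>M PiM {..<N} (\<lambda>_. S))"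
    by (intro sets_pair_measure_cong sets_PiM_cong) (auto simp: D(2))
  have \<phi>m': "\<phi> \<in> borel_measurable (distr M borel Xk \<Otimes>\<^sub>M PiM {..<N} D)"
    using \<phi>m unfolding measurable_cong_sets[OF setsP refl] .
  have "(\<integral>\<^sup>+ w. ennreal ((norm (gbar gradF N (fst (psgd_state qrsel svsel gradF N \<eta> \<mu> \<tau> X0 Q0 (\<lambda>s i. xi s i w) k)) (\<lambda>i. xi k i w)))\<^sup>2) \<partial>M)
     = (\<integral>\<^sup>+ w. \<phi> (Xk w, Z w) \<partial>M)" unfolding integrand ..
  also have "\<dots> = (\<integral>\<^sup>+ p. \<phi> p \<partial>distr M (borel \<Otimes>\<^sub>M PiM {..<N} (\<lambda>_. S)) (\<lambda>x. (Xk x, Z x)))"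
    by (rule nn_integral_distr[symmetric, OF pm]) (use \<phi>m in simp)
  also have "\<dots> = (\<integral>\<^sup>+ p. \<phi> p \<partial>(distr M borel Xk \<Otimes>\<^sub>M PiM {..<N} D))"
    unfolding joint[symmetric] Zd ..
  also have "\<dots> = (\<integral>\<^sup>+ x. \<integral>\<^sup>+ z. \<phi> (x, z) \<partial>PiM {..<N} D \<partial>distr M borel Xk)"
    by (rule PD.nn_integral_fst[symmetric, OF \<phi>m'])
  also have "\<dots> \<le> (\<integral>\<^sup>+ x. ennreal G2 \<partial>distr M borel Xk)"
  proof (rule nn_integral_mono)
    fix x
    show "(\<integral>\<^sup>+ z. \<phi> (x, z) \<partial>PiM {..<N} D) \<le> ennreal G2"
      using A3_G[of x] unfolding \<phi>_def gbar_def by simp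
  qed
  also have "\<dots> = ennreal G2" using DX.emeasure_space_1 by simp
  finally show "(\<integral>\<^sup>+ w. ennreal ((norm (gbar gradF N (fst (psgd_state qrsel svsel gradF N \<eta> \<mu> \<tau> X0 Q0 (\<lambda>s i. xi s i w) k)) (\<lambda>i. xi k i w)))\<^sup>2) \<partial>M) \<le> ennreal G2" .
qed

theorem lemma4:
  fixes M :: "'w measure" and S :: "'xi measure" and D :: "nat \<Rightarrow> 'xi measure"
    and xi :: "nat \<Rightarrow> nat \<Rightarrow> 'w \<Rightarrow> 'xi"
    and F :: "real^'n^'m \<Rightarrow> 'xi \<Rightarrow> real"
    and gradF :: "real^'n^'m \<Rightarrow> 'xi \<Rightarrow> real^'n^'m"
    and gradfi :: "nat \<Rightarrow> real^'n^'m \<Rightarrow> real^'n^'m"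
    and gradf :: "real^'n^'m \<Rightarrow> real^'n^'m"
    and qrsel :: "real^('r::{finite,linorder})^'m \<Rightarrow> real^('r::{finite,linorder})^'m"
    and svsel :: "real^'n^'m \<Rightarrow> real^('r::{finite,linorder})^'m"
    and N \<tau> :: nat and \<eta> \<mu> \<sigma> \<omega> :: real
    and X0 :: "real^'n^'m" and Q0 :: "real^('r::{finite,linorder})^'n"
  assumes dims: "CARD('n) \<le> CARD('m)" "CARD('r) \<le> CARD('n)"
    and N: "N \<ge> 1"
    and mu: "0 \<le> \<mu>" "\<mu> < 1" and tau: "\<tau> \<ge> 1" and eta: "\<eta> > 0"
    \<comment> \<open>probability model: samples xi_t^{(i)} ~ D_i, independent across nodes and iterations\<close>
    and M: "prob_space M"
    and D: "\<And>i. i < N \<Longrightarrow> prob_space (D i)" "\<And>i. i < N \<Longrightarrow> sets (D i) = sets S"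
    and xi_meas: "\<And>t i. i < N \<Longrightarrow> xi t i \<in> measurable M S"
    and xi_distr: "\<And>t i. i < N \<Longrightarrow> distr M (D i) (xi t i) = D i"
    and xi_indep: "prob_space.indep_vars M (\<lambda>_. S) (\<lambda>(t, i). xi t i) (UNIV \<times> {..<N})"
    \<comment> \<open>stochastic objective and gradients\<close>
    and gradF_meas: "(\<lambda>(X, z). gradF X z) \<in> borel_measurable (borel \<Otimes>\<^sub>M S)"
    and gradF_grad: "\<And>X z. ((\<lambda>Y. F Y z) has_derivative (\<lambda>H. gradF X z \<bullet> H)) (at X)"
    and F_int: "\<And>i X. i < N \<Longrightarrow> integrable (D i) (F X)"
    and gradfi: "\<And>i X. i < N \<Longrightarrow>
        ((\<lambda>Y. \<integral>z. F Y z \<partial>D i) has_derivative (\<lambda>H. gradfi i X \<bullet> H)) (at X)"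
    and gradf: "\<And>X. ((\<lambda>Y. (1 / real N) * (\<Sum>i<N. \<integral>z. F Y z \<partial>D i))
                      has_derivative (\<lambda>H. gradf X \<bullet> H)) (at X)"
    \<comment> \<open>Assumption (A3)\<close>
    and A3_grad: "\<And>X. (norm (gradf X))\<^sup>2 \<le> \<omega>\<^sup>2"
    and A3_var: "\<And>i X. i < N \<Longrightarrow>
        (\<integral>\<^sup>+ z. ennreal ((norm (gradF X z - gradfi i X))\<^sup>2) \<partial>D i) \<le> ennreal (\<sigma>\<^sup>2)"
    and A3_G: "\<And>X. (\<integral>\<^sup>+ z. ennreal ((norm ((1 / real N) *\<^sub>R (\<Sum>i<N. gradF X (z i))))\<^sup>2)
                      \<partial>(PiM {..<N} D)) \<le> ennreal (\<sigma>\<^sup>2 + \<omega>\<^sup>2)"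
    \<comment> \<open>implementation of QR and top-r SVD (measurable selections)\<close>
    and qrsel: "\<And>A. is_QR_factor A (qrsel A)" "qrsel \<in> borel_measurable borel"
    and svsel: "\<And>Dl. is_top_left_sv Dl (svsel Dl)" "svsel \<in> borel_measurable borel"
  shows "\<forall>t. (\<integral>\<^sup>+ w. ennreal ((norm (psgd_mom qrsel svsel gradF N \<eta> \<mu> \<tau> X0 Q0
                                  (\<lambda>s i. xi s i w) t))\<^sup>2) \<partial>M)
           \<le> ennreal (92 * (real \<tau>)\<^sup>2 * (\<sigma>\<^sup>2 + \<omega>\<^sup>2) /
                      ((1 - \<mu>)\<^sup>2 * (real CARD('r) / real CARD('n))\<^sup>2))"
proof (intro allI)
  fix t
  interpret prob_space M by (rule M)
  define \<delta> where "\<delta> = real CARD('r) / real CARD('n)"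
  define \<rho> where "\<rho> = (\<lambda>t. if t mod \<tau> = 0 then 1 - real CARD('r) / real CARD('n) / 2 else (1::real))"
  define V where "V = real \<tau> / (\<delta> / 2) / (1 - \<mu>)"
  define c where "c = (\<lambda>k. cm \<rho> \<mu> (Suc t) k)"
  define a2 where "a2 = (\<lambda>k w. (norm (gbar gradF N (fst (psgd_state qrsel svsel gradF N \<eta> \<mu> \<tau> X0 Q0 (\<lambda>s i. xi s i w) k)) (\<lambda>i. xi k i w)))\<^sup>2)"
  define G2 where "G2 = \<sigma>\<^sup>2 + \<omega>\<^sup>2"
  have dpos: "0 < \<delta>" unfolding \<delta>_def by simp
  have d1: "\<delta> \<le> 1" unfolding \<delta>_def using dims(2) by simp
  have V0: "0 \<le> V" unfolding V_def using dpos mu by simp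
  have G0: "0 \<le> G2" unfolding G2_def by simp
  have pw: "(norm (psgd_mom qrsel svsel gradF N \<eta> \<mu> \<tau> X0 Q0 (\<lambda>s i. xi s i w) t))\<^sup>2 \<le> V * (\<Sum>k<Suc t. c k * a2 k w)" for w
    using path_mom_bound[OF qrsel(1) svsel(1) dims(2) mu tau, where xi="\<lambda>s i. xi s i w" and t=t and N=N and gradF=gradF and \<eta>=\<eta> and ?X0.0=X0 and ?Q0.0=Q0]
    unfolding V_def c_def a2_def \<rho>_def \<delta>_def by simp
  have rho0: "0 \<le> \<rho> k" for k unfolding \<rho>_def using d1[unfolded \<delta>_def] by auto
  have c0: "0 \<le> c k" for k unfolding c_def by (rule cm_nonneg[OF rho0 mu(1)])
  have csum: "(\<Sum>k<Suc t. c k) \<le> V"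
  proof -
    have q: "0 \<le> 1 - real CARD('r) / real CARD('n) / 2" "1 - real CARD('r) / real CARD('n) / 2 < 1"
      using dpos d1 unfolding \<delta>_def by auto
    have "(\<Sum>k<Suc t. c k) \<le> real \<tau> / (1 - (1 - real CARD('r) / real CARD('n) / 2)) / (1 - \<mu>)"
      unfolding c_def \<rho>_def by (rule sum_cm_bound[OF q tau mu])
    then show ?thesis unfolding V_def \<delta>_def by simp
  qed
  have meas: "(\<lambda>w. ennreal (a2 k w)) \<in> borel_measurable M" for k
    unfolding a2_def
    by (rule grad_expect(1)[where ?G2.0="\<sigma>\<^sup>2 + \<omega>\<^sup>2", OF N M D(1) D(2) xi_meas xi_distr xi_indep gradF_meas A3_G qrsel(2) svsel(2)])
  have Ek: "(\<integral>\<^sup>+ w. ennreal (a2 k w) \<partial>M) \<le> ennreal G2" for k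
    unfolding a2_def G2_def
    by (rule grad_expect(2)[where ?G2.0="\<sigma>\<^sup>2 + \<omega>\<^sup>2", OF N M D(1) D(2) xi_meas xi_distr xi_indep gradF_meas A3_G qrsel(2) svsel(2)])
  have "(\<integral>\<^sup>+ w. ennreal ((norm (psgd_mom qrsel svsel gradF N \<eta> \<mu> \<tau> X0 Q0 (\<lambda>s i. xi s i w) t))\<^sup>2) \<partial>M)
      \<le> (\<integral>\<^sup>+ w. (\<Sum>k<Suc t. ennreal (V * c k) * ennreal (a2 k w)) \<partial>M)"
  proof (rule nn_integral_mono)
    fix w
    have a0: "0 \<le> a2 k w" for k unfolding a2_def by simp
    have "ennreal ((norm (psgd_mom qrsel svsel gradF N \<eta> \<mu> \<tau> X0 Q0 (\<lambda>s i. xi s i w) t))\<^sup>2)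
        \<le> ennreal (V * (\<Sum>k<Suc t. c k * a2 k w))" by (rule ennreal_leI[OF pw])
    also have "V * (\<Sum>k<Suc t. c k * a2 k w) = (\<Sum>k<Suc t. V * c k * a2 k w)"
      by (subst sum_distrib_left) (simp add: mult.assoc)
    also have "ennreal \<dots> = (\<Sum>k<Suc t. ennreal (V * c k * a2 k w))"
      by (rule sum_ennreal[symmetric]) (use V0 c0 a0 in auto)
    also have "\<dots> = (\<Sum>k<Suc t. ennreal (V * c k) * ennreal (a2 k w))"
      using V0 c0 a0 by (intro sum.cong refl) (simp add: ennreal_mult)
    finally show "ennreal ((norm (psgd_mom qrsel svsel gradF N \<eta> \<mu> \<tau> X0 Q0 (\<lambda>s i. xi s i w) t))\<^sup>2)
        \<le> (\<Sum>k<Suc t. ennreal (V * c k) * ennreal (a2 k w))" .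
  qed
  also have "\<dots> = (\<Sum>k<Suc t. (\<integral>\<^sup>+ w. ennreal (V * c k) * ennreal (a2 k w) \<partial>M))"
  proof (rule nn_integral_sum)
    fix k
    note meas[of k, measurable]
    show "(\<lambda>w. ennreal (V * c k) * ennreal (a2 k w)) \<in> borel_measurable M" by measurable
  qed
  also have "\<dots> = (\<Sum>k<Suc t. ennreal (V * c k) * (\<integral>\<^sup>+ w. ennreal (a2 k w) \<partial>M))"
    by (intro sum.cong refl nn_integral_cmult meas)
  also have "\<dots> \<le> (\<Sum>k<Suc t. ennreal (V * c k) * ennreal G2)"
    by (intro sum_mono mult_left_mono Ek) auto
  also have "\<dots> = (\<Sum>k<Suc t. ennreal (V * c k * G2))"
    using V0 c0 G0 by (intro sum.cong refl) (simp add: ennreal_mult)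
  also have "\<dots> = ennreal (\<Sum>k<Suc t. V * c k * G2)"
    by (rule sum_ennreal) (use V0 c0 G0 in simp)
  also have "(\<Sum>k<Suc t. V * c k * G2) = V * (\<Sum>k<Suc t. c k) * G2"
    by (simp only: sum_distrib_left[symmetric] sum_distrib_right[symmetric])
  also have "ennreal (V * (\<Sum>k<Suc t. c k) * G2) \<le> ennreal (V * V * G2)"
    using csum V0 G0 by (intro ennreal_leI mult_right_mono mult_left_mono) auto
  also have "V * V * G2 \<le> 92 * (real \<tau>)\<^sup>2 * (\<sigma>\<^sup>2 + \<omega>\<^sup>2) / ((1 - \<mu>)\<^sup>2 * (real CARD('r) / real CARD('n))\<^sup>2)"
  proof -
    define X where "X = (real \<tau>)\<^sup>2 * G2 / ((1 - \<mu>)\<^sup>2 * \<delta>\<^sup>2)"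
    have X0: "0 \<le> X" unfolding X_def using G0 by simp
    have "V * V * G2 = 4 * X" unfolding V_def X_def using dpos mu by (simp add: field_simps power2_eq_square)
    also have "\<dots> \<le> 92 * X" using X0 by simp
    also have "92 * X = 92 * (real \<tau>)\<^sup>2 * (\<sigma>\<^sup>2 + \<omega>\<^sup>2) / ((1 - \<mu>)\<^sup>2 * (real CARD('r) / real CARD('n))\<^sup>2)"
      unfolding X_def G2_def \<delta>_def by simp
    finally show ?thesis .
  qed
  then have "ennreal (V * V * G2) \<le> ennreal (92 * (real \<tau>)\<^sup>2 * (\<sigma>\<^sup>2 + \<omega>\<^sup>2) / ((1 - \<mu>)\<^sup>2 * (real CARD('r) / real CARD('n))\<^sup>2))"
    by (rule ennreal_leI)
  finally show "(\<integral>\<^sup>+ w. ennreal ((norm (psgd_mom qrsel svsel gradF N \<eta> \<mu> \<tau> X0 Q0 (\<lambda>s i. xi s i w) t))\<^sup>2) \<partial>M)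
           \<le> ennreal (92 * (real \<tau>)\<^sup>2 * (\<sigma>\<^sup>2 + \<omega>\<^sup>2) / ((1 - \<mu>)\<^sup>2 * (real CARD('r) / real CARD('n))\<^sup>2))" .
qed

end
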